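(* Let $(X,\omega_X,\mu_X)$ and $(Y,\omega_Y,\mu_Y)$ be measure networks and let $\mathscr{C}(\mu_X,\mu_Y)$ carry the narrow topology (as a subspace of $\operatorname{Prob}(X\times Y)$). If $1\le p<\infty$, then the distortion functional $\operatorname{dis}_p:\mathscr{C}(\mu_X,\mu_Y)\to\mathbb{R}_+$ is continuous. For $p=\infty$, $\operatorname{dis}_\infty$ is lower semicontinuous on $\mathscr{C}(\mu_X,\mu_Y)$.
   Context: A measure network is a triple $(X,\omega_X,\mu_X)$ where $X$ is a Polish space, $\mu_X$ is a fully supported Borel probability measure on $X$, and $\omega_X:X\times X\to\mathbb{R}$ is a bounded Borel measurable function. For measure networks $(X,\omega_X,\mu_X),(Y,\omega_Y,\mu_Y)$, $\mathscr{C}(\mu_X,\mu_Y)$ is the set of couplings, i.e. Borel probability measures $\mu$ on $X\times Y$ with $\mu(A\times Y)=\mu_X(A)$ and $\mu(X\times B)=\mu_Y(B)$ for all Borel $A\subseteq X$, $B\subseteq Y$. For $\mu\in\mathscr{C}(\mu_X,\mu_Y)$ and $p\in[1,\infty)$, $\operatorname{dis}_p(\mu):=\left(\int_{X\times Y}\int_{X\times Y}|\omega_X(x,x')-\omega_Y(y,y')|^p\,d\mu(x,y)\,d\mu(x',y')\right)^{1/p}$, and $\operatorname{dis}_\infty(\mu)$ is the $\mu\otimes\mu$-essential supremum of $|\omega_X(x,x')-\omega_Y(y,y')|$ over $((x,y),(x',y'))\in(X\times Y)^2$. The narrow topology on probability measures is the topology in which $\nu_n\to\nu$ iff $\int f\,d\nu_n\to\int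 f\,d\nu$ for all bounded continuous $f$. *)

theory Defs
  imports "HOL-Analysis.Analysis" "HOL-Probability.Probability"
begin

definition measure_network :: "('a::polish_space \<times> 'a \<Rightarrow> real) \<Rightarrow> 'a measure \<Rightarrow> bool" where
  "measure_network \<omega> \<mu> \<longleftrightarrow>
     prob_space \<mu> \<and> sets \<mu> = sets borel \<and>
     (\<forall>U. open U \<and> U \<noteq> {} \<longrightarrow> emeasure \<mu> U > 0) \<and>
     (\<exists>B. \<forall>z. \<bar>\<omega> z\<bar> \<le> B) \<and>
     \<omega> \<in> borel_measurable borel"

definition couplings :: "'a::polish_space measure \<Rightarrow> 'b::polish_space measure \<Rightarrow> ('a \<times> 'b) measure set" where
  "couplings \<mu>X \<mu>Y = {\<mu>. prob_space \<mu> \<and> sets \<mu> = sets borel \<and>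
     (\<forall>A \<in> sets borel. emeasure \<mu> (A \<times> UNIV) = emeasure \<mu>X A) \<and>
     (\<forall>B \<in> sets borel. emeasure \<mu> (UNIV \<times> B) = emeasure \<mu>Y B)}"

definition narrow_topology :: "('c::topological_space) measure topology" where
  "narrow_topology = topology_generated_by
     {{\<nu>. (\<integral>z. f z \<partial>\<nu>) \<in> U} | f U. continuous_on UNIV f \<and> bounded (range f) \<and> open (U :: real set)}"

definition dis_p :: "real \<Rightarrow> ('a \<times> 'a \<Rightarrow> real) \<Rightarrow> ('b \<times> 'b \<Rightarrow> real) \<Rightarrow> ('a \<times> 'b) measure \<Rightarrow> real" where
  "dis_p p \<omega>X \<omega>Y \<mu> =
     (\<integral>u. \<bar>\<omega>X (fst (fst u), fst (snd u)) - \<omega>Y (snd (fst u), snd (snd u))\<bar> powr p \<partial>(\<mu> \<Otimes>\<^sub>M \<mu>)) powr (1 / p)"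

definition dis_inf :: "('a \<times> 'a \<Rightarrow> real) \<Rightarrow> ('b \<times> 'b \<Rightarrow> real) \<Rightarrow> ('a \<times> 'b) measure \<Rightarrow> ereal" where
  "dis_inf \<omega>X \<omega>Y \<mu> =
     esssup (\<mu> \<Otimes>\<^sub>M \<mu>) (\<lambda>u. ereal \<bar>\<omega>X (fst (fst u), fst (snd u)) - \<omega>Y (snd (fst u), snd (snd u))\<bar>)"

definition lower_semicontinuous_map :: "'a topology \<Rightarrow> ('a \<Rightarrow> ereal) \<Rightarrow> bool" where
  "lower_semicontinuous_map T f \<longleftrightarrow> (\<forall>t. openin T {x \<in> topspace T. t < f x})"

end

theory Submission
  imports Defs
begin

lemma space_borel_sets: "sets M = sets borel \<Longrightarrow> space M = UNIV"
  by (metis sets_eq_imp_space_eq space_borel)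

lemma bdd_integrable:
  fixes h :: "'c \<Rightarrow> real"
  assumes "finite_measure M" "h \<in> borel_measurable M" "\<And>x. \<bar>h x\<bar> \<le> c"
  shows "integrable M h"
  using finite_measure.integrable_const_bound[OF assms(1), of h c] assms(2,3) by auto

lemma cont_meas:
  assumes "sets M = sets borel" "continuous_on UNIV g"
  shows "g \<in> borel_measurable M"
  by (subst measurable_cong_sets[OF assms(1) refl]) (rule borel_measurable_continuous_onI[OF assms(2)])

lemma tight:
  fixes M :: "'c::{second_countable_topology, complete_space} measure" and e :: real
  assumes P: "prob_space M" and S: "sets M = sets borel" and e: "e > 0"
  shows "\<exists>K. compact K \<and> measure M (-K) < e"
proof (cases "e > 1")
  case True
  interpret prob_space M by fact
  have sp: "space M = UNIV" using S by (rule space_borel_sets)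
  show ?thesis using True prob_space sp by (intro exI[of _ "{}"]) auto
next
  case False
  interpret prob_space M by fact
  have sp: "space M = UNIV" using S by (rule space_borel_sets)
  have "emeasure M UNIV = (SUP K \<in> {K. K \<subseteq> UNIV \<and> compact K}. emeasure M K)"
    by (rule inner_regular[OF S]) (auto simp: sp)
  moreover have "emeasure M UNIV = 1" using emeasure_space_1 sp by simp
  moreover have "ennreal (1 - e) < 1" using e False by (simp add: ennreal_lessI)
  ultimately obtain K where K: "compact K" "ennreal (1 - e) < emeasure M K"
    by (metis (no_types, lifting) less_SUP_iff mem_Collect_eq)
  have Ks: "K \<in> events" using K(1) S by (simp add: compact_imp_closed borel_closed)
  have "1 - e < measure M K" using K(2) e False by (simp add: emeasure_eq_measure ennreal_less_iff)
  moreover have "measure M (-K) = 1 - measure M K"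
    using prob_compl[OF Ks] sp by (simp add: Compl_eq_Diff_UNIV)
  ultimately show ?thesis using K(1) by auto
qed

lemma approx_ind:
  fixes M :: "'c::{second_countable_topology, complete_space} measure" and e :: real
  assumes F: "finite_measure M" and S: "sets M = sets borel" and B: "B \<in> sets borel" and e: "e > 0"
  shows "\<exists>g. continuous_on UNIV g \<and> (\<forall>x. 0 \<le> g x \<and> g x \<le> 1) \<and> (\<integral>x. \<bar>indicator B x - g x\<bar> \<partial>M) < e"
proof -
  interpret finite_measure M by fact
  have sp: "space M = UNIV" using S by (rule space_borel_sets)
  have fin: "emeasure M (space M) \<noteq> \<infinity>" by simp
  have Bs: "B \<in> sets M" using B S by simp
  obtain K where K: "K \<subseteq> B" "compact K" "measure M B - e/2 < measure M K"
  proof (cases "measure M B < e/2")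
    case True
    then show ?thesis using that[of "{}"] by auto
  next
    case False
    have "ennreal (measure M B - e/2) < emeasure M B"
      using False e by (simp add: emeasure_eq_measure ennreal_lessI)
    also have "emeasure M B = (SUP K \<in> {K. K \<subseteq> B \<and> compact K}. emeasure M K)"
      by (rule inner_regular[OF S fin B])
    finally obtain K where "K \<subseteq> B" "compact K" "ennreal (measure M B - e/2) < emeasure M K"
      by (metis (no_types, lifting) less_SUP_iff mem_Collect_eq)
    then show ?thesis using that[of K] False e by (simp add: emeasure_eq_measure ennreal_less_iff)
  qed
  obtain U where U: "B \<subseteq> U" "open U" "measure M U < measure M B + e/2"
  proof -
    have "emeasure M B = (INF U \<in> {U. B \<subseteq> U \<and> open U}. emeasure M U)"
      by (rule outer_regular[OF S fin B])
    moreover have "emeasure M B < ennreal (measure M B + e/2)"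
      using e by (simp add: emeasure_eq_measure ennreal_lessI)
    ultimately obtain U where "B \<subseteq> U" "open U" "emeasure M U < ennreal (measure M B + e/2)"
      by (metis (no_types, lifting) INF_less_iff mem_Collect_eq)
    then show ?thesis using that[of U] by (simp add: emeasure_eq_measure ennreal_less_iff)
  qed
  have ns: "normal_space (euclidean :: 'c topology)"
    by (rule metrizable_imp_normal_space[OF metrizable_space_euclidean])
  have "closedin euclidean (-U)" using U(2) closed_closedin by blast
  moreover have "closedin euclidean K" using K(2) compact_imp_closed closed_closedin by blast
  moreover have "disjnt (-U) K" using K(1) U(1) by (auto simp: disjnt_def)
  ultimately obtain f where f: "continuous_map euclidean (top_of_set {0..1}) f" "f ` (-U) \<subseteq> {0}" "f ` K \<subseteq> {1::real}"
    using Urysohn_lemma[OF ns, of "-U" K 0 1] by auto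
  have fc: "continuous_on UNIV f" and fr: "\<And>x. f x \<in> {0..1}"
    using f(1) by (auto simp: continuous_map_in_subtopology)
  have Ks: "K \<in> sets M" using K(2) S by (simp add: compact_imp_closed borel_closed)
  have Us: "U \<in> sets M" using U(2) S by (simp add: borel_open)
  have pw: "\<bar>indicator B x - f x\<bar> \<le> indicator (U - K) x" for x
  proof -
    have "f x \<in> {0..1}" by (rule fr)
    then show ?thesis using f(2,3) K(1) U(1) by (auto simp: indicator_def)
  qed
  have fm: "f \<in> borel_measurable M" by (rule cont_meas[OF S fc])
  have "(\<integral>x. \<bar>indicator B x - f x\<bar> \<partial>M) \<le> (\<integral>x. indicator (U - K) x \<partial>M)"
  proof (rule integral_mono)
    show "integrable M (\<lambda>x. \<bar>indicator B x - f x\<bar>)"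
    proof (rule bdd_integrable[OF F, where c=2])
      show "(\<lambda>x. \<bar>indicator B x - f x\<bar>) \<in> borel_measurable M" using Bs fm by auto
      show "\<bar>\<bar>indicator B x - f x\<bar>\<bar> \<le> 2" for x using fr[of x] by (auto simp: indicator_def)
    qed
    show "integrable M (indicator (U - K) :: _ \<Rightarrow> real)"
      by (rule bdd_integrable[OF F, where c=1]) (use Us Ks in \<open>auto simp: indicator_def\<close>)
  qed (rule pw)
  also have "\<dots> = measure M (U - K)" using sp by simp
  also have "\<dots> = measure M U - measure M K"
    using K(1) U(1) Us Ks by (intro finite_measure_Diff) auto
  also have "\<dots> < e" using K(3) U(3) by simp
  finally show ?thesis using fc fr by auto
qed

definition L1a :: "'c::topological_space measure \<Rightarrow> ('c \<Rightarrow> real) \<Rightarrow> bool" where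
  "L1a M f \<longleftrightarrow> (\<forall>e>0. \<exists>g. continuous_on UNIV g \<and> (\<exists>c. \<forall>x. \<bar>g x\<bar> \<le> c) \<and> (\<integral>x. \<bar>f x - g x\<bar> \<partial>M) < e)"

lemma L1a_add:
  assumes F: "finite_measure M" and S: "sets M = sets borel"
    and m1: "f1 \<in> borel_measurable M" and b1: "\<And>x. \<bar>f1 x\<bar> \<le> c1"
    and m2: "f2 \<in> borel_measurable M" and b2: "\<And>x. \<bar>f2 x\<bar> \<le> c2"
    and a1: "L1a M f1" and a2: "L1a M f2"
  shows "L1a M (\<lambda>x. f1 x + f2 x)"
  unfolding L1a_def
proof (intro allI impI)
  fix e :: real assume e: "e > 0"
  obtain g1 d1 where g1: "continuous_on UNIV g1" "\<And>x. \<bar>g1 x\<bar> \<le> d1" "(\<integral>x. \<bar>f1 x - g1 x\<bar> \<partial>M) < e/2"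
    using a1 e unfolding L1a_def by (meson half_gt_zero)
  obtain g2 d2 where g2: "continuous_on UNIV g2" "\<And>x. \<bar>g2 x\<bar> \<le> d2" "(\<integral>x. \<bar>f2 x - g2 x\<bar> \<partial>M) < e/2"
    using a2 e unfolding L1a_def by (meson half_gt_zero)
  have gm1: "g1 \<in> borel_measurable M" by (rule cont_meas[OF S g1(1)])
  have gm2: "g2 \<in> borel_measurable M" by (rule cont_meas[OF S g2(1)])
  have i1: "integrable M (\<lambda>x. \<bar>f1 x - g1 x\<bar>)"
  proof (rule bdd_integrable[OF F, where c="c1+d1"])
    show "\<bar>\<bar>f1 x - g1 x\<bar>\<bar> \<le> c1 + d1" for x using b1[of x] g1(2)[of x] by linarith
  qed (use m1 gm1 in auto)
  have i2: "integrable M (\<lambda>x. \<bar>f2 x - g2 x\<bar>)"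
  proof (rule bdd_integrable[OF F, where c="c2+d2"])
    show "\<bar>\<bar>f2 x - g2 x\<bar>\<bar> \<le> c2 + d2" for x using b2[of x] g2(2)[of x] by linarith
  qed (use m2 gm2 in auto)
  have i3: "integrable M (\<lambda>x. \<bar>(f1 x + f2 x) - (g1 x + g2 x)\<bar>)"
  proof (rule bdd_integrable[OF F, where c="c1+d1+c2+d2"])
    show "\<bar>\<bar>(f1 x + f2 x) - (g1 x + g2 x)\<bar>\<bar> \<le> c1+d1+c2+d2" for x
      using b1[of x] g1(2)[of x] b2[of x] g2(2)[of x] by linarith
  qed (use m1 gm1 m2 gm2 in auto)
  have "(\<integral>x. \<bar>(f1 x + f2 x) - (g1 x + g2 x)\<bar> \<partial>M) \<le> (\<integral>x. \<bar>f1 x - g1 x\<bar> + \<bar>f2 x - g2 x\<bar> \<partial>M)"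
    by (rule integral_mono[OF i3 Bochner_Integration.integrable_add[OF i1 i2]]) linarith
  also have "\<dots> = (\<integral>x. \<bar>f1 x - g1 x\<bar> \<partial>M) + (\<integral>x. \<bar>f2 x - g2 x\<bar> \<partial>M)"
    by (rule Bochner_Integration.integral_add[OF i1 i2])
  also have "\<dots> < e" using g1(3) g2(3) by linarith
  finally have "(\<integral>x. \<bar>(f1 x + f2 x) - (g1 x + g2 x)\<bar> \<partial>M) < e" .
  moreover have "continuous_on UNIV (\<lambda>x. g1 x + g2 x)" using g1(1) g2(1) by (intro continuous_intros)
  moreover have "\<forall>x. \<bar>g1 x + g2 x\<bar> \<le> d1 + d2" using g1(2) g2(2) by (meson abs_triangle_ineq add_mono order_trans)
  ultimately show "\<exists>g. continuous_on UNIV g \<and> (\<exists>c. \<forall>x. \<bar>g x\<bar> \<le> c) \<and> (\<integral>x. \<bar>f1 x + f2 x - g x\<bar> \<partial>M) < e"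
    by blast
qed

lemma L1a_scale:
  assumes a: "L1a M f"
  shows "L1a M (\<lambda>x. a * f x)"
  unfolding L1a_def
proof (intro allI impI)
  fix e :: real assume e: "e > 0"
  show "\<exists>g. continuous_on UNIV g \<and> (\<exists>c. \<forall>x. \<bar>g x\<bar> \<le> c) \<and> (\<integral>x. \<bar>a * f x - g x\<bar> \<partial>M) < e"
  proof (cases "a = 0")
    case True
    then show ?thesis using e by (intro exI[of _ "\<lambda>x. 0"]) auto
  next
    case False
    then have ap: "\<bar>a\<bar> > 0" by simp
    obtain g d where g: "continuous_on UNIV g" "\<And>x. \<bar>g x\<bar> \<le> d" "(\<integral>x. \<bar>f x - g x\<bar> \<partial>M) < e / \<bar>a\<bar>"
      using a e ap unfolding L1a_def by (meson divide_pos_pos)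
    have "(\<integral>x. \<bar>a * f x - a * g x\<bar> \<partial>M) = (\<integral>x. \<bar>a\<bar> * \<bar>f x - g x\<bar> \<partial>M)"
      by (simp add: abs_mult right_diff_distrib[symmetric])
    also have "\<dots> = \<bar>a\<bar> * (\<integral>x. \<bar>f x - g x\<bar> \<partial>M)" by simp
    also have "\<dots> < \<bar>a\<bar> * (e / \<bar>a\<bar>)" using g(3) ap by (intro mult_strict_left_mono) auto
    also have "\<dots> = e" using ap by simp
    finally have "(\<integral>x. \<bar>a * f x - a * g x\<bar> \<partial>M) < e" .
    moreover have "continuous_on UNIV (\<lambda>x. a * g x)" using g(1) by (intro continuous_intros)
    moreover have "\<forall>x. \<bar>a * g x\<bar> \<le> \<bar>a\<bar> * d" using g(2) by (simp add: abs_mult mult_left_mono)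
    ultimately show ?thesis by blast
  qed
qed

lemma L1a_sum:
  assumes F: "finite_measure M" and S: "sets M = sets borel" and I: "finite I"
    and m: "\<And>i. i \<in> I \<Longrightarrow> f i \<in> borel_measurable M" and b: "\<And>i x. i \<in> I \<Longrightarrow> \<bar>f i x\<bar> \<le> c"
    and a: "\<And>i. i \<in> I \<Longrightarrow> L1a M (f i)"
  shows "L1a M (\<lambda>x. \<Sum>i\<in>I. f i x)"
  using I m b a
proof (induction I rule: finite_induct)
  case empty
  then show ?case unfolding L1a_def by (auto intro!: exI[of _ "\<lambda>x. 0"])
next
  case (insert j I)
  have "L1a M (\<lambda>x. f j x + (\<Sum>i\<in>I. f i x))"
  proof (rule L1a_add[OF F S, of "f j" c "\<lambda>x. \<Sum>i\<in>I. f i x" "real (card I) * c"])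
    show "\<bar>\<Sum>i\<in>I. f i x\<bar> \<le> real (card I) * c" for x
    proof -
      have "\<bar>\<Sum>i\<in>I. f i x\<bar> \<le> (\<Sum>i\<in>I. \<bar>f i x\<bar>)" by (rule sum_abs)
      also have "\<dots> \<le> (\<Sum>i\<in>I. c)" using insert.prems(2) by (intro sum_mono) auto
      finally show ?thesis by simp
    qed
    show "(\<lambda>x. \<Sum>i\<in>I. f i x) \<in> borel_measurable M" using insert.prems(1) by auto
  qed (use insert in auto)
  then show ?case using insert.hyps by simp
qed

lemma L1a_unif:
  assumes F: "finite_measure M" and S: "sets M = sets borel" and fm: "f \<in> borel_measurable M"
    and ap: "\<And>e. e > 0 \<Longrightarrow> \<exists>h. h \<in> borel_measurable M \<and> (\<exists>c. \<forall>x. \<bar>h x\<bar> \<le> c) \<and> L1a M h \<and> (\<forall>x. \<bar>f x - h x\<bar> \<le> e)"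
  shows "L1a M f"
  unfolding L1a_def
proof (intro allI impI)
  interpret finite_measure M by fact
  fix e :: real assume e: "e > 0"
  define m where "m = measure M (space M)"
  have m0: "m \<ge> 0" unfolding m_def by simp
  define d where "d = e / (2 * (m + 1))"
  have d: "d > 0" unfolding d_def using e m0 by simp
  have dm: "d * m < e / 2" unfolding d_def using e m0 by (simp add: field_simps)
  obtain h ch where h: "h \<in> borel_measurable M" "\<And>x. \<bar>h x\<bar> \<le> ch" "L1a M h" "\<And>x. \<bar>f x - h x\<bar> \<le> d"
    using ap[OF d] by blast
  obtain g cg where g: "continuous_on UNIV g" "\<And>x. \<bar>g x\<bar> \<le> cg" "(\<integral>x. \<bar>h x - g x\<bar> \<partial>M) < e/2"
    using h(3) e unfolding L1a_def by (meson half_gt_zero)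
  have gm: "g \<in> borel_measurable M" by (rule cont_meas[OF S g(1)])
  have i1: "integrable M (\<lambda>x. \<bar>f x - h x\<bar>)"
    by (rule bdd_integrable[OF F, where c=d]) (use fm h in auto)
  have i2: "integrable M (\<lambda>x. \<bar>h x - g x\<bar>)"
  proof (rule bdd_integrable[OF F, where c="ch+cg"])
    show "\<bar>\<bar>h x - g x\<bar>\<bar> \<le> ch + cg" for x using h(2)[of x] g(2)[of x] by linarith
  qed (use h gm in auto)
  have i3: "integrable M (\<lambda>x. \<bar>f x - g x\<bar>)"
  proof (rule bdd_integrable[OF F, where c="d+ch+cg"])
    show "\<bar>\<bar>f x - g x\<bar>\<bar> \<le> d+ch + cg" for x using h(2)[of x] g(2)[of x] h(4)[of x] by linarith
  qed (use fm gm in auto)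
  have "(\<integral>x. \<bar>f x - g x\<bar> \<partial>M) \<le> (\<integral>x. \<bar>f x - h x\<bar> + \<bar>h x - g x\<bar> \<partial>M)"
    by (rule integral_mono[OF i3 Bochner_Integration.integrable_add[OF i1 i2]]) linarith
  also have "\<dots> = (\<integral>x. \<bar>f x - h x\<bar> \<partial>M) + (\<integral>x. \<bar>h x - g x\<bar> \<partial>M)"
    by (rule Bochner_Integration.integral_add[OF i1 i2])
  also have "(\<integral>x. \<bar>f x - h x\<bar> \<partial>M) \<le> (\<integral>x. d \<partial>M)"
    by (rule integral_mono[OF i1]) (use h(4) in auto)
  also have "(\<integral>x. d \<partial>M) = d * m" unfolding m_def by simp
  finally have "(\<integral>x. \<bar>f x - g x\<bar> \<partial>M) < e" using dm g(3) by linarith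
  then show "\<exists>g. continuous_on UNIV g \<and> (\<exists>c. \<forall>x. \<bar>g x\<bar> \<le> c) \<and> (\<integral>x. \<bar>f x - g x\<bar> \<partial>M) < e"
    using g(1,2) by blast
qed

lemma L1a_indicator:
  fixes M :: "'c::{second_countable_topology, complete_space} measure"
  assumes F: "finite_measure M" and S: "sets M = sets borel" and B: "B \<in> sets borel"
  shows "L1a M (indicator B)"
  unfolding L1a_def
proof (intro allI impI)
  fix e :: real assume "e > 0"
  from approx_ind[OF F S B this] obtain g where
    "continuous_on UNIV g" "\<forall>x. 0 \<le> g x \<and> g x \<le> 1" "(\<integral>x. \<bar>indicator B x - g x\<bar> \<partial>M) < e"
    by blast
  then show "\<exists>g. continuous_on UNIV g \<and> (\<exists>c. \<forall>x. \<bar>g x\<bar> \<le> c) \<and> (\<integral>x. \<bar>indicator B x - g x\<bar> \<partial>M) < e"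
    by (intro exI[of _ g]) (auto intro!: exI[of _ 1])
qed

lemma L1a_bm:
  fixes M :: "'c::{second_countable_topology, complete_space} measure"
  assumes F: "finite_measure M" and S: "sets M = sets borel" and fm: "f \<in> borel_measurable M"
    and fb: "\<And>x. \<bar>f x\<bar> \<le> B"
  shows "L1a M f"
proof (rule L1a_unif[OF F S fm])
  have sp: "space M = UNIV" using S by (rule space_borel_sets)
  fix e :: real assume e: "e > 0"
  obtain n :: nat where n: "1 / real (Suc n) < e" using e by (meson nat_approx_posE)
  define r where "r = real (Suc n)"
  have r: "r > 0" "1 / r < e" using n unfolding r_def by auto
  define h where "h = (\<lambda>x. of_int \<lfloor>r * f x\<rfloor> / r)"
  define N where "N = \<lceil>r * B\<rceil> + 1"
  have hm: "h \<in> borel_measurable M" unfolding h_def using fm by measurable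
  have hl: "f x - 1 / r < h x \<and> h x \<le> f x" for x
  proof -
    have a: "r * f x - 1 < of_int \<lfloor>r * f x\<rfloor>" "of_int \<lfloor>r * f x\<rfloor> \<le> r * f x"
      by linarith+
    have "(r * f x - 1) / r < of_int \<lfloor>r * f x\<rfloor> / r" by (rule divide_strict_right_mono[OF a(1) r(1)])
    moreover have "(r * f x - 1) / r = f x - 1 / r" using r(1) by (simp add: field_simps)
    moreover have "of_int \<lfloor>r * f x\<rfloor> / r \<le> (r * f x) / r" by (rule divide_right_mono[OF a(2)]) (use r in auto)
    moreover have "(r * f x) / r = f x" using r(1) by simp
    ultimately show ?thesis unfolding h_def by auto
  qed
  have hb: "\<bar>h x\<bar> \<le> B + 1" for x
  proof -
    note hl[of x]
    moreover have "1 / r \<le> 1" using r unfolding r_def by simp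
    ultimately show ?thesis using fb[of x] by linarith
  qed
  have hd: "\<bar>f x - h x\<bar> \<le> e" for x
  proof -
    note hl[of x]
    then show ?thesis using r by linarith
  qed
  have range: "\<lfloor>r * f x\<rfloor> \<in> {-N..N}" for x
  proof -
    have "\<bar>r * f x\<bar> \<le> r * B" using fb[of x] r by (simp add: abs_mult)
    then show ?thesis unfolding N_def by (simp add: abs_le_iff) linarith
  qed
  define A where "A = (\<lambda>k::int. {x. \<lfloor>r * f x\<rfloor> = k})"
  have As: "A k \<in> sets borel" for k
  proof -
    have "{x \<in> space M. \<lfloor>r * f x\<rfloor> = k} \<in> sets M" using fm by measurable
    then show ?thesis unfolding A_def using sp S by simp
  qed
  have heq: "h = (\<lambda>x. \<Sum>k\<in>{-N..N}. of_int k / r * indicator (A k) x)"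
  proof
    fix x
    have "(\<Sum>k\<in>{-N..N}. of_int k / r * indicator (A k) x) =
          (\<Sum>k\<in>{-N..N}. if \<lfloor>r * f x\<rfloor> = k then of_int k / r else 0)"
      unfolding A_def by (intro sum.cong) (auto simp: indicator_def)
    also have "\<dots> = of_int \<lfloor>r * f x\<rfloor> / r" using range[of x] by (simp add: sum.delta)
    finally show "h x = (\<Sum>k\<in>{-N..N}. of_int k / r * indicator (A k) x)" unfolding h_def by simp
  qed
  have "L1a M (\<lambda>x. \<Sum>k\<in>{-N..N}. of_int k / r * indicator (A k) x)"
  proof (rule L1a_sum[OF F S, where c = "of_int N / r"])
    show "finite {-N..N}" by simp
    show "(\<lambda>x. of_int k / r * indicator (A k) x) \<in> borel_measurable M" for k
      using As[of k] S by simp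
    show "\<bar>of_int k / r * indicator (A k) x\<bar> \<le> of_int N / r" if "k \<in> {-N..N}" for k x
    proof -
      have "\<bar>of_int k\<bar> \<le> (of_int N :: real)" using that by auto
      then show ?thesis using r by (auto simp: indicator_def abs_mult divide_right_mono)
    qed
    show "L1a M (\<lambda>x. of_int k / r * indicator (A k) x)" for k
      by (rule L1a_scale[OF L1a_indicator[OF F S As]])
  qed
  then have "L1a M h" using heq by simp
  then show "\<exists>h. h \<in> borel_measurable M \<and> (\<exists>c. \<forall>x. \<bar>h x\<bar> \<le> c) \<and> L1a M h \<and> (\<forall>x. \<bar>f x - h x\<bar> \<le> e)"
    using hm hb hd by blast
qed

lemma L1_approx_bounded:
  fixes M :: "'c::{second_countable_topology, complete_space} measure" and e B :: real
  assumes F: "finite_measure M" and S: "sets M = sets borel" and fm: "f \<in> borel_measurable M"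
    and fb: "\<And>x. \<bar>f x\<bar> \<le> B" and e: "e > 0"
  shows "\<exists>g. continuous_on UNIV g \<and> (\<forall>x. \<bar>g x\<bar> \<le> B) \<and> (\<integral>x. \<bar>f x - g x\<bar> \<partial>M) < e"
proof -
  obtain g c where g: "continuous_on UNIV g" "\<And>x. \<bar>g x\<bar> \<le> c" "(\<integral>x. \<bar>f x - g x\<bar> \<partial>M) < e"
    using L1a_bm[OF F S fm fb] e unfolding L1a_def by blast
  define g' where "g' = (\<lambda>x. max (-B) (min B (g x)))"
  have gc: "continuous_on UNIV g'" unfolding g'_def using g(1) by (intro continuous_intros)
  have gb: "\<bar>g' x\<bar> \<le> B" for x unfolding g'_def using fb[of x] by auto
  have gm: "g' \<in> borel_measurable M" by (rule cont_meas[OF S gc])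
  have gm0: "g \<in> borel_measurable M" by (rule cont_meas[OF S g(1)])
  have "(\<integral>x. \<bar>f x - g' x\<bar> \<partial>M) \<le> (\<integral>x. \<bar>f x - g x\<bar> \<partial>M)"
  proof (rule integral_mono)
    show "integrable M (\<lambda>x. \<bar>f x - g' x\<bar>)"
    proof (rule bdd_integrable[OF F, where c="B+B"])
      show "\<bar>\<bar>f x - g' x\<bar>\<bar> \<le> B + B" for x using fb[of x] gb[of x] by linarith
    qed (use fm gm in auto)
    show "integrable M (\<lambda>x. \<bar>f x - g x\<bar>)"
    proof (rule bdd_integrable[OF F, where c="B+c"])
      show "\<bar>\<bar>f x - g x\<bar>\<bar> \<le> B + c" for x using fb[of x] g(2)[of x] by linarith
    qed (use fm gm0 in auto)
    show "\<bar>f x - g' x\<bar> \<le> \<bar>f x - g x\<bar>" for x unfolding g'_def using fb[of x] by (auto simp: abs_le_iff)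
  qed
  then show ?thesis using g(3) gc gb by (intro exI[of _ g']) auto
qed

lemma powr_lip_aux:
  fixes x y p R :: real
  assumes p: "p \<ge> 1" and y: "0 \<le> y" "y < x" and x: "x \<le> R"
  shows "x powr p - y powr p \<le> p * R powr (p - 1) * (x - y)"
proof -
  have "continuous_on {y..x} (\<lambda>t. t powr p)"
    using y p by (intro continuous_on_powr') (auto intro: continuous_intros)
  moreover have "(\<lambda>t. t powr p) differentiable (at t)" if "y < t" "t < x" for t
    using has_real_derivative_powr[of t p] that y real_differentiable_def by fastforce
  ultimately obtain l z where z: "y < z" "z < x" "DERIV (\<lambda>t. t powr p) z :> l"
    "x powr p - y powr p = (x - y) * l"
    using MVT[OF y(2)] by blast
  have "l = p * z powr (p - 1)"
    using DERIV_unique[OF z(3) has_real_derivative_powr[of z p]] z y by auto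
  moreover have "z powr (p - 1) \<le> R powr (p - 1)" using z y x p by (intro powr_mono2) auto
  ultimately have "l \<le> p * R powr (p - 1)" using p by (simp add: mult_left_mono)
  then show ?thesis using z(4) y by (simp add: mult.commute mult_right_mono)
qed

lemma powr_lip:
  fixes x y p R :: real
  assumes p: "p \<ge> 1" and "0 \<le> x" "x \<le> R" "0 \<le> y" "y \<le> R"
  shows "\<bar>x powr p - y powr p\<bar> \<le> p * R powr (p - 1) * \<bar>x - y\<bar>"
proof -
  consider "y < x" | "x < y" | "x = y" by linarith
  then show ?thesis
  proof cases
    case 1
    have "y powr p \<le> x powr p" using 1 assms by (intro powr_mono2) auto
    then show ?thesis using powr_lip_aux[OF p _ 1, of R] assms 1 by auto
  next
    case 2
    have "x powr p \<le> y powr p" using 2 assms by (intro powr_mono2) auto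
    then show ?thesis using powr_lip_aux[OF p _ 2, of R] assms 2 by auto
  qed simp
qed

lemma narrow_topspace: "topspace (narrow_topology :: 'c::topological_space measure topology) = UNIV"
proof -
  have c: "continuous_on UNIV (\<lambda>z::'c. 0::real)" "bounded (range (\<lambda>z::'c. 0::real))" "open (UNIV::real set)"
    by auto
  have "{\<nu>::'c measure. (\<integral>z. (\<lambda>z::'c. 0::real) z \<partial>\<nu>) \<in> UNIV} \<in> {{\<nu>. (\<integral>z. f z \<partial>\<nu>) \<in> U} | f U. continuous_on UNIV f \<and> bounded (range f) \<and> open (U :: real set)}"
    using c by blast
  then have "(UNIV :: 'c measure set) \<in> {{\<nu>. (\<integral>z. f z \<partial>\<nu>) \<in> U} | f U. continuous_on UNIV f \<and> bounded (range f) \<and> open (U :: real set)}"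
    by simp
  then show ?thesis unfolding narrow_topology_def by auto
qed

lemma narrow_open:
  fixes f :: "'c::topological_space \<Rightarrow> real"
  assumes "continuous_on UNIV f" "bounded (range f)" "open U"
  shows "openin narrow_topology {\<nu>. (\<integral>z. f z \<partial>\<nu>) \<in> U}"
  unfolding narrow_topology_def openin_topology_generated_by_iff
  by (rule generate_topology_on.Basis) (use assms in blast)

lemma openin_finite_Inter:
  assumes "finite T" "\<And>t. t \<in> T \<Longrightarrow> openin X (S t)"
  shows "openin X (topspace X \<inter> \<Inter>(S ` T))"
  using assms
proof (induction T rule: finite_induct)
  case empty
  then show ?case by simp
next
  case (insert t T)
  have "topspace X \<inter> \<Inter>(S ` insert t T) = S t \<inter> (topspace X \<inter> \<Inter>(S ` T))" by auto
  then show ?case using insert by (metis insertCI openin_Int)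
qed

lemma local_to_cont:
  assumes "\<And>\<nu>0 e. \<nu>0 \<in> C \<Longrightarrow> e > 0 \<Longrightarrow> \<exists>V. openin (subtopology narrow_topology C) V \<and> \<nu>0 \<in> V \<and> (\<forall>\<nu>\<in>V. \<bar>F \<nu> - F \<nu>0\<bar> < e)"
  shows "continuous_map (subtopology narrow_topology C) euclideanreal F"
  unfolding continuous_map_def
proof (intro conjI allI impI)
  show "F \<in> topspace (subtopology narrow_topology C) \<rightarrow> topspace euclideanreal" by simp
  fix U :: "real set" assume "openin euclideanreal U"
  then have U: "open U" by simp
  show "openin (subtopology narrow_topology C) {x \<in> topspace (subtopology narrow_topology C). F x \<in> U}"
  proof (subst openin_subopen, intro ballI)
    fix \<nu>0 assume "\<nu>0 \<in> {x \<in> topspace (subtopology narrow_topology C). F x \<in> U}"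
    then have n0: "\<nu>0 \<in> C" "F \<nu>0 \<in> U" by (auto simp: narrow_topspace)
    obtain e where e: "e > 0" "ball (F \<nu>0) e \<subseteq> U" using U n0(2) open_contains_ball by blast
    obtain V where V: "openin (subtopology narrow_topology C) V" "\<nu>0 \<in> V" "\<forall>\<nu>\<in>V. \<bar>F \<nu> - F \<nu>0\<bar> < e"
      using assms[OF n0(1) e(1)] by blast
    have "V \<subseteq> {x \<in> topspace (subtopology narrow_topology C). F x \<in> U}"
    proof
      fix \<nu> assume "\<nu> \<in> V"
      then have "\<nu> \<in> topspace (subtopology narrow_topology C)" "F \<nu> \<in> ball (F \<nu>0) e"
        using V openin_subset[OF V(1)] by (auto simp: dist_real_def abs_minus_commute)
      then show "\<nu> \<in> {x \<in> topspace (subtopology narrow_topology C). F x \<in> U}" using e(2) by auto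
    qed
    then show "\<exists>T. openin (subtopology narrow_topology C) T \<and> \<nu>0 \<in> T \<and> T \<subseteq> {x \<in> topspace (subtopology narrow_topology C). F x \<in> U}"
      using V by blast
  qed
qed

lemma narrow_nbhd:
  fixes T :: "('c::topological_space \<Rightarrow> real) set"
  assumes T: "finite T" "\<And>f. f \<in> T \<Longrightarrow> continuous_on UNIV f \<and> bounded (range f)"
    and n0: "\<nu>0 \<in> C" and e: "e > 0"
  shows "\<exists>V. openin (subtopology narrow_topology C) V \<and> \<nu>0 \<in> V \<and>
     (\<forall>\<nu>\<in>V. \<nu> \<in> C \<and> (\<forall>f\<in>T. \<bar>(\<integral>z. f z \<partial>\<nu>) - (\<integral>z. f z \<partial>\<nu>0)\<bar> < e))"
proof -
  define S :: "('c \<Rightarrow> real) \<Rightarrow> 'c measure set" where "S = (\<lambda>f. {\<nu>. (\<integral>z. f z \<partial>\<nu>) \<in> ball (\<integral>z. f z \<partial>\<nu>0) e})"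
  have "openin narrow_topology (topspace narrow_topology \<inter> \<Inter>(S ` T))"
    using T unfolding S_def by (intro openin_finite_Inter narrow_open) auto
  then have "openin (subtopology narrow_topology C) (C \<inter> (topspace narrow_topology \<inter> \<Inter>(S ` T)))"
    by (rule openin_subtopology_Int2)
  moreover have "\<nu>0 \<in> C \<inter> (topspace narrow_topology \<inter> \<Inter>(S ` T))"
    using n0 e unfolding S_def by (auto simp: narrow_topspace)
  moreover have "\<forall>\<nu>\<in>C \<inter> (topspace narrow_topology \<inter> \<Inter>(S ` T)). \<nu> \<in> C \<and> (\<forall>f\<in>T. \<bar>(\<integral>z. f z \<partial>\<nu>) - (\<integral>z. f z \<partial>\<nu>0)\<bar> < e)"
    unfolding S_def by (auto simp: dist_real_def abs_minus_commute)
  ultimately show ?thesis by blast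
qed

lemma cont_slice1: "continuous_on UNIV G \<Longrightarrow> continuous_on UNIV (\<lambda>z'. G (z, z'))"
  by (rule continuous_on_compose2[of UNIV G]) (auto intro: continuous_intros)

lemma cont_slice2: "continuous_on UNIV G \<Longrightarrow> continuous_on UNIV (\<lambda>z. G (z, z'))"
  by (rule continuous_on_compose2[of UNIV G]) (auto intro: continuous_intros)

lemma prob_fin: "prob_space N \<Longrightarrow> finite_measure N"
  unfolding prob_space_def by blast

lemma split_bound:
  fixes f :: "'z::topological_space \<Rightarrow> real"
  assumes N: "prob_space N" "sets N = sets borel" and fm: "f \<in> borel_measurable N"
    and K: "closed K" and b1: "\<And>z. z \<in> K \<Longrightarrow> \<bar>f z\<bar> \<le> c1" and b2: "\<And>z. \<bar>f z\<bar> \<le> c2" and c1: "c1 \<ge> 0"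
  shows "\<bar>\<integral>z. f z \<partial>N\<bar> \<le> c1 + c2 * measure N (-K)"
proof -
  interpret prob_space N by fact
  have sp: "space N = UNIV" using N(2) by (rule space_borel_sets)
  have Ks: "-K \<in> sets N" using K N(2) by (simp add: borel_open open_Compl)
  have c2: "c2 \<ge> 0" using b2[of undefined] by linarith
  have "\<bar>\<integral>z. f z \<partial>N\<bar> \<le> (\<integral>z. \<bar>f z\<bar> \<partial>N)" by (rule integral_abs_bound)
  also have "\<dots> \<le> (\<integral>z. c1 + c2 * indicator (-K) z \<partial>N)"
  proof (rule integral_mono)
    show "integrable N (\<lambda>z. \<bar>f z\<bar>)"
      by (rule bdd_integrable[OF prob_fin[OF N(1)], where c=c2]) (use fm b2 in auto)
    show "integrable N (\<lambda>z. c1 + c2 * indicator (-K) z)"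
    proof (rule bdd_integrable[OF prob_fin[OF N(1)], where c="c1 + c2"])
      show "\<bar>c1 + c2 * indicator (- K) x\<bar> \<le> c1 + c2" for x using c1 c2 by (auto simp: indicator_def)
    qed (use Ks in auto)
    show "\<bar>f z\<bar> \<le> c1 + c2 * indicator (- K) z" for z
      using b1[of z] b2[of z] c1 c2 by (cases "z \<in> K") (auto simp: indicator_def)
  qed
  also have "\<dots> = (\<integral>z. c1 \<partial>N) + (\<integral>z. c2 * indicator (-K) z \<partial>N)"
  proof (rule Bochner_Integration.integral_add)
    show "integrable N (\<lambda>z. c1)" by (rule bdd_integrable[OF prob_fin[OF N(1)], where c="\<bar>c1\<bar>"]) auto
    show "integrable N (\<lambda>z. c2 * indicator (-K) z)"
    proof (rule bdd_integrable[OF prob_fin[OF N(1)], where c="c2"])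
      show "\<bar>c2 * indicator (- K) x\<bar> \<le> c2" for x using c2 by (auto simp: indicator_def)
    qed (use Ks in auto)
  qed
  also have "\<dots> = c1 + c2 * measure N (-K)"
    using Ks sp prob_space by simp
  finally show ?thesis .
qed

lemma shift_bound:
  fixes G :: "'z::{metric_space,second_countable_topology} \<times> 'z \<Rightarrow> real"
  assumes N: "prob_space N" "sets N = sets borel" and Gc: "continuous_on UNIV G" and Gb: "\<And>u. \<bar>G u\<bar> \<le> M0"
    and K: "closed K" and close: "\<And>z'. z' \<in> K \<Longrightarrow> \<bar>G (z, z') - G (w, z')\<bar> \<le> e" and e: "e \<ge> 0"
  shows "\<bar>(\<integral>z'. G (z, z') \<partial>N) - (\<integral>z'. G (w, z') \<partial>N)\<bar> \<le> e + 2 * M0 * measure N (-K)"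
proof -
  have m1: "(\<lambda>z'. G (z, z')) \<in> borel_measurable N" by (rule cont_meas[OF N(2) cont_slice1[OF Gc]])
  have m2: "(\<lambda>z'. G (w, z')) \<in> borel_measurable N" by (rule cont_meas[OF N(2) cont_slice1[OF Gc]])
  have i1: "integrable N (\<lambda>z'. G (z, z'))" by (rule bdd_integrable[OF prob_fin[OF N(1)] m1 Gb])
  have i2: "integrable N (\<lambda>z'. G (w, z'))" by (rule bdd_integrable[OF prob_fin[OF N(1)] m2 Gb])
  have "(\<integral>z'. G (z, z') \<partial>N) - (\<integral>z'. G (w, z') \<partial>N) = (\<integral>z'. G (z, z') - G (w, z') \<partial>N)"
    by (rule Bochner_Integration.integral_diff[OF i1 i2, symmetric])
  also have "\<bar>\<dots>\<bar> \<le> e + 2 * M0 * measure N (-K)"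
  proof (rule split_bound[OF N _ K])
    show "\<bar>G (z, z') - G (w, z')\<bar> \<le> 2 * M0" for z' using Gb[of "(z,z')"] Gb[of "(w,z')"] by linarith
  qed (use m1 m2 close e in auto)
  finally show ?thesis .
qed

lemma Hsup:
  fixes G :: "'z::{metric_space,second_countable_topology} \<times> 'z \<Rightarrow> real"
  assumes Gc: "continuous_on UNIV G" and Gb: "\<And>u. \<bar>G u\<bar> \<le> M0" and K: "compact K" and e: "e > 0"
  shows "\<exists>Fs. finite Fs \<and> (\<forall>N N0. prob_space N \<longrightarrow> sets N = sets borel \<longrightarrow> prob_space N0 \<longrightarrow> sets N0 = sets borel \<longrightarrow>
     (\<forall>w\<in>Fs. \<bar>(\<integral>z'. G (w, z') \<partial>N) - (\<integral>z'. G (w, z') \<partial>N0)\<bar> < e) \<longrightarrow>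
     (\<forall>z\<in>K. \<bar>(\<integral>z'. G (z, z') \<partial>N) - (\<integral>z'. G (z, z') \<partial>N0)\<bar> \<le> 3 * e + 2 * M0 * (measure N (-K) + measure N0 (-K))))"
proof -
  have "uniformly_continuous_on (K \<times> K) G"
    by (rule compact_uniformly_continuous[OF continuous_on_subset[OF Gc] compact_Times[OF K K]]) auto
  then obtain d where d: "d > 0" "\<And>x x'. x \<in> K \<times> K \<Longrightarrow> x' \<in> K \<times> K \<Longrightarrow> dist x' x < d \<Longrightarrow> dist (G x') (G x) < e"
    using e unfolding uniformly_continuous_on_def by metis
  have "K \<subseteq> (\<Union>w\<in>K. ball w d)" using d(1) by auto
  then obtain Fs where Fs: "Fs \<subseteq> K" "finite Fs" "K \<subseteq> (\<Union>w\<in>Fs. ball w d)"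
    using compactE_image[OF K, of K "\<lambda>w. ball w d"] by blast
  have Kc: "closed K" using K by (rule compact_imp_closed)
  show ?thesis
  proof (intro exI[of _ Fs] conjI allI impI ballI)
    show "finite Fs" by fact
    fix N N0 z
    assume N: "prob_space N" "sets N = sets borel" and N0: "prob_space N0" "sets N0 = sets borel"
      and cond: "\<forall>w\<in>Fs. \<bar>(\<integral>z'. G (w, z') \<partial>N) - (\<integral>z'. G (w, z') \<partial>N0)\<bar> < e" and z: "z \<in> K"
    obtain w where w: "w \<in> Fs" "dist w z < d" using Fs(3) z by auto
    have wK: "w \<in> K" using w Fs by auto
    have close: "\<bar>G (z, z') - G (w, z')\<bar> \<le> e" if "z' \<in> K" for z'
    proof -
      have "dist (z, z') (w, z') = dist z w" by (simp add: dist_Pair_Pair)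
      then have "dist (G (z, z')) (G (w, z')) < e" using d(2)[of "(w,z')" "(z,z')"] w(2) z wK that
        by (simp add: dist_commute)
      then show ?thesis by (simp add: dist_real_def)
    qed
    have a1: "\<bar>(\<integral>z'. G (z, z') \<partial>N) - (\<integral>z'. G (w, z') \<partial>N)\<bar> \<le> e + 2 * M0 * measure N (-K)"
      by (rule shift_bound[OF N Gc Gb Kc close]) (use e in auto)
    have a2: "\<bar>(\<integral>z'. G (z, z') \<partial>N0) - (\<integral>z'. G (w, z') \<partial>N0)\<bar> \<le> e + 2 * M0 * measure N0 (-K)"
      by (rule shift_bound[OF N0 Gc Gb Kc close]) (use e in auto)
    have a3: "\<bar>(\<integral>z'. G (w, z') \<partial>N) - (\<integral>z'. G (w, z') \<partial>N0)\<bar> < e" using cond w(1) by blast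
    show "\<bar>(\<integral>z'. G (z, z') \<partial>N) - (\<integral>z'. G (z, z') \<partial>N0)\<bar> \<le> 3 * e + 2 * M0 * (measure N (-K) + measure N0 (-K))"
      using a1 a2 a3 by (simp add: algebra_simps)
  qed
qed

lemma pair_sets_borel:
  assumes "sets N1 = sets (borel :: 'z::second_countable_topology measure)" "sets N2 = sets (borel :: 'w::second_countable_topology measure)"
  shows "sets (N1 \<Otimes>\<^sub>M N2) = sets (borel :: ('z \<times> 'w) measure)"
  using sets_pair_measure_cong[OF assms] borel_prod by metis

lemma pair_G_meas:
  fixes G :: "'z::{metric_space,second_countable_topology} \<times> 'z \<Rightarrow> real"
  assumes "sets N1 = sets borel" "sets N2 = sets borel" "continuous_on UNIV G"
  shows "G \<in> borel_measurable (N1 \<Otimes>\<^sub>M N2)"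
  by (rule cont_meas[OF pair_sets_borel[OF assms(1,2)] assms(3)])

lemma pair_G_int:
  fixes G :: "'z::{metric_space,second_countable_topology} \<times> 'z \<Rightarrow> real"
  assumes N1: "prob_space N1" "sets N1 = sets borel" and N2: "prob_space N2" "sets N2 = sets borel"
    and Gc: "continuous_on UNIV G" and Gb: "\<And>u. \<bar>G u\<bar> \<le> M0"
  shows "integrable (N1 \<Otimes>\<^sub>M N2) G"
proof -
  interpret A: prob_space N1 by fact
  interpret B: prob_space N2 by fact
  interpret pair_prob_space N1 N2 ..
  show ?thesis
    by (rule bdd_integrable[OF prob_fin[OF P.prob_space_axioms] pair_G_meas[OF N1(2) N2(2) Gc] Gb])
qed

lemma H_meas:
  fixes G :: "'z::{metric_space,second_countable_topology} \<times> 'z \<Rightarrow> real"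
  assumes N1: "sets N1 = sets borel" and N2: "prob_space N2" "sets N2 = sets borel"
    and Gc: "continuous_on UNIV G"
  shows "(\<lambda>z. \<integral>z'. G (z, z') \<partial>N2) \<in> borel_measurable N1"
proof -
  interpret B: prob_space N2 by fact
  have "case_prod (\<lambda>z z'. G (z, z')) \<in> borel_measurable (N1 \<Otimes>\<^sub>M N2)"
    using pair_G_meas[OF N1 N2(2) Gc] by simp
  then show ?thesis by (rule B.borel_measurable_lebesgue_integral)
qed

lemma H_bound:
  fixes G :: "'z::{metric_space,second_countable_topology} \<times> 'z \<Rightarrow> real"
  assumes N2: "prob_space N2" "sets N2 = sets borel" and Gc: "continuous_on UNIV G" and Gb: "\<And>u. \<bar>G u\<bar> \<le> M0"
  shows "\<bar>\<integral>z'. G (z, z') \<partial>N2\<bar> \<le> M0"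
proof -
  interpret B: prob_space N2 by fact
  have m: "(\<lambda>z'. G (z, z')) \<in> borel_measurable N2" by (rule cont_meas[OF N2(2) cont_slice1[OF Gc]])
  have "\<bar>\<integral>z'. G (z, z') \<partial>N2\<bar> \<le> (\<integral>z'. \<bar>G (z, z')\<bar> \<partial>N2)" by (rule integral_abs_bound)
  also have "\<dots> \<le> M0"
    by (rule B.integral_le_const) (use bdd_integrable[OF prob_fin[OF N2(1)], of "\<lambda>z'. \<bar>G (z, z')\<bar>" M0] m Gb in auto)
  finally show ?thesis .
qed

lemma prod_split:
  fixes G :: "'z::{metric_space,second_countable_topology} \<times> 'z \<Rightarrow> real"
  assumes N: "prob_space N" "sets N = sets borel" and N0: "prob_space N0" "sets N0 = sets borel"
    and Gc: "continuous_on UNIV G" and Gb: "\<And>u. \<bar>G u\<bar> \<le> M0"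
  shows "(\<integral>u. G u \<partial>(N \<Otimes>\<^sub>M N)) - (\<integral>u. G u \<partial>(N0 \<Otimes>\<^sub>M N0)) =
    (\<integral>z. (\<integral>z'. G (z, z') \<partial>N) - (\<integral>z'. G (z, z') \<partial>N0) \<partial>N) +
    (\<integral>z'. (\<integral>z. G (z, z') \<partial>N) - (\<integral>z. G (z, z') \<partial>N0) \<partial>N0)"
proof -
  interpret A: prob_space N by fact
  interpret B: prob_space N0 by fact
  interpret NN: pair_prob_space N N ..
  interpret N0N0: pair_prob_space N0 N0 ..
  interpret NN0: pair_prob_space N N0 ..
  have Gs: "(\<lambda>(z, z'). G (z, z')) = G" by auto
  have e1: "(\<integral>u. G u \<partial>(N \<Otimes>\<^sub>M N)) = (\<integral>z. (\<integral>z'. G (z, z') \<partial>N) \<partial>N)"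
    using NN.integral_fst'[OF pair_G_int[OF N N Gc Gb]] by simp
  have e2: "(\<integral>u. G u \<partial>(N0 \<Otimes>\<^sub>M N0)) = (\<integral>z'. (\<integral>z. G (z, z') \<partial>N0) \<partial>N0)"
    using N0N0.integral_snd[of "\<lambda>z z'. G (z, z')"] pair_G_int[OF N0 N0 Gc Gb] Gs by simp
  have e3: "(\<integral>z. (\<integral>z'. G (z, z') \<partial>N0) \<partial>N) = (\<integral>z'. (\<integral>z. G (z, z') \<partial>N) \<partial>N0)"
    using NN0.integral_fst'[OF pair_G_int[OF N N0 Gc Gb]] NN0.integral_snd[of "\<lambda>z z'. G (z, z')"] pair_G_int[OF N N0 Gc Gb] Gs
    by simp
  have G'c: "continuous_on UNIV (\<lambda>u. G (snd u, fst u))"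
    by (rule continuous_on_compose2[OF Gc]) (auto intro!: continuous_on_Pair continuous_on_snd continuous_on_fst continuous_on_id)
  have int1: "integrable N (\<lambda>z. \<integral>z'. G (z, z') \<partial>N1)" if "prob_space N1" "sets N1 = sets borel" for N1
    by (rule bdd_integrable[OF prob_fin[OF N(1)] H_meas[OF N(2) that Gc] H_bound[OF that Gc Gb]])
  have int2: "integrable N0 (\<lambda>z'. \<integral>z. G (z, z') \<partial>N1)" if "prob_space N1" "sets N1 = sets borel" for N1
    using bdd_integrable[OF prob_fin[OF N0(1)] H_meas[OF N0(2) that G'c] H_bound[OF that G'c], of M0] Gb
    by simp
  have "(\<integral>z. (\<integral>z'. G (z, z') \<partial>N) - (\<integral>z'. G (z, z') \<partial>N0) \<partial>N) =
        (\<integral>z. (\<integral>z'. G (z, z') \<partial>N) \<partial>N) - (\<integral>z. (\<integral>z'. G (z, z') \<partial>N0) \<partial>N)"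
    by (rule Bochner_Integration.integral_diff[OF int1[OF N] int1[OF N0]])
  moreover have "(\<integral>z'. (\<integral>z. G (z, z') \<partial>N) - (\<integral>z. G (z, z') \<partial>N0) \<partial>N0) =
        (\<integral>z'. (\<integral>z. G (z, z') \<partial>N) \<partial>N0) - (\<integral>z'. (\<integral>z. G (z, z') \<partial>N0) \<partial>N0)"
    by (rule Bochner_Integration.integral_diff[OF int2[OF N] int2[OF N0]])
  ultimately show ?thesis using e1 e2 e3 by simp
qed

lemma prod_cont_local:
  fixes G :: "'z::{metric_space,second_countable_topology} \<times> 'z \<Rightarrow> real"
  assumes Gc: "continuous_on UNIV G" and Gb: "\<And>u. \<bar>G u\<bar> \<le> M0"
    and C: "\<And>\<nu>. \<nu> \<in> C \<Longrightarrow> prob_space \<nu> \<and> sets \<nu> = sets borel"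
    and tight: "\<And>\<eta>. \<eta> > 0 \<Longrightarrow> \<exists>K. compact K \<and> (\<forall>\<nu>\<in>C. measure \<nu> (-K) \<le> \<eta>)"
    and n0: "\<nu>0 \<in> C" and e: "e > 0"
  shows "\<exists>V. openin (subtopology narrow_topology C) V \<and> \<nu>0 \<in> V \<and>
    (\<forall>\<nu>\<in>V. \<bar>(\<integral>u. G u \<partial>(\<nu> \<Otimes>\<^sub>M \<nu>)) - (\<integral>u. G u \<partial>(\<nu>0 \<Otimes>\<^sub>M \<nu>0))\<bar> < e)"
proof -
  have M0: "M0 \<ge> 0" using Gb[of undefined] by linarith
  define e' where "e' = e / 12"
  define \<eta> where "\<eta> = e / (24 * (M0 + 1))"
  have e': "e' > 0" using e by (simp add: e'_def)
  have \<eta>: "\<eta> > 0" using e M0 by (simp add: \<eta>_def)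
  have M0\<eta>: "12 * M0 * \<eta> < e / 2"
  proof -
    have "12 * M0 * \<eta> = (e / 2) * (M0 / (M0 + 1))" unfolding \<eta>_def using M0 by (simp add: field_simps)
    also have "\<dots> < (e / 2) * 1" using M0 e by (intro mult_strict_left_mono) auto
    finally show ?thesis by simp
  qed
  obtain K where K: "compact K" "\<And>\<nu>. \<nu> \<in> C \<Longrightarrow> measure \<nu> (-K) \<le> \<eta>" using tight[OF \<eta>] by blast
  have Kc: "closed K" using K(1) by (rule compact_imp_closed)
  define G' where "G' = (\<lambda>u. G (snd u, fst u))"
  have G'c: "continuous_on UNIV G'" unfolding G'_def
    by (rule continuous_on_compose2[OF Gc]) (auto intro!: continuous_on_Pair continuous_on_snd continuous_on_fst continuous_on_id)
  have G'b: "\<And>u. \<bar>G' u\<bar> \<le> M0" unfolding G'_def by (rule Gb)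
  obtain Fs1 where Fs1: "finite Fs1" "\<forall>N N0. prob_space N \<longrightarrow> sets N = sets borel \<longrightarrow> prob_space N0 \<longrightarrow> sets N0 = sets borel \<longrightarrow>
     (\<forall>w\<in>Fs1. \<bar>(\<integral>z'. G (w, z') \<partial>N) - (\<integral>z'. G (w, z') \<partial>N0)\<bar> < e') \<longrightarrow>
     (\<forall>z\<in>K. \<bar>(\<integral>z'. G (z, z') \<partial>N) - (\<integral>z'. G (z, z') \<partial>N0)\<bar> \<le> 3 * e' + 2 * M0 * (measure N (-K) + measure N0 (-K)))"
    using Hsup[OF Gc Gb K(1) e'] by blast
  obtain Fs2 where Fs2: "finite Fs2" "\<forall>N N0. prob_space N \<longrightarrow> sets N = sets borel \<longrightarrow> prob_space N0 \<longrightarrow> sets N0 = sets borel \<longrightarrow>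
     (\<forall>w\<in>Fs2. \<bar>(\<integral>z'. G' (w, z') \<partial>N) - (\<integral>z'. G' (w, z') \<partial>N0)\<bar> < e') \<longrightarrow>
     (\<forall>z\<in>K. \<bar>(\<integral>z'. G' (z, z') \<partial>N) - (\<integral>z'. G' (z, z') \<partial>N0)\<bar> \<le> 3 * e' + 2 * M0 * (measure N (-K) + measure N0 (-K)))"
    using Hsup[OF G'c G'b K(1) e'] by blast
  define T where "T = (\<lambda>w z'. G (w, z')) ` Fs1 \<union> (\<lambda>w z'. G' (w, z')) ` Fs2"
  have T: "finite T" "\<And>f. f \<in> T \<Longrightarrow> continuous_on UNIV f \<and> bounded (range f)"
  proof -
    show "finite T" unfolding T_def using Fs1(1) Fs2(1) by simp
    fix f assume "f \<in> T"
    then consider w where "f = (\<lambda>z'. G (w, z'))" | w where "f = (\<lambda>z'. G' (w, z'))"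
      unfolding T_def by blast
    then show "continuous_on UNIV f \<and> bounded (range f)"
    proof cases
      case 1
      then show ?thesis using cont_slice1[OF Gc] Gb unfolding bounded_iff by (auto simp: real_norm_def)
    next
      case 2
      then show ?thesis using cont_slice1[OF G'c] G'b unfolding bounded_iff by (auto simp: real_norm_def)
    qed
  qed
  obtain V where V: "openin (subtopology narrow_topology C) V" "\<nu>0 \<in> V"
    "\<forall>\<nu>\<in>V. \<nu> \<in> C \<and> (\<forall>f\<in>T. \<bar>(\<integral>z. f z \<partial>\<nu>) - (\<integral>z. f z \<partial>\<nu>0)\<bar> < e')"
    using narrow_nbhd[OF T n0 e'] by blast
  show ?thesis
  proof (intro exI[of _ V] conjI ballI)
    show "openin (subtopology narrow_topology C) V" "\<nu>0 \<in> V" by (fact V(1), fact V(2))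
    fix \<nu> assume "\<nu> \<in> V"
    then have nC: "\<nu> \<in> C" and cond: "\<forall>f\<in>T. \<bar>(\<integral>z. f z \<partial>\<nu>) - (\<integral>z. f z \<partial>\<nu>0)\<bar> < e'"
      using V(3) by auto
    have N: "prob_space \<nu>" "sets \<nu> = sets borel" using C[OF nC] by auto
    have N0: "prob_space \<nu>0" "sets \<nu>0 = sets borel" using C[OF n0] by auto
    have mK: "measure \<nu> (-K) \<le> \<eta>" "measure \<nu>0 (-K) \<le> \<eta>" using K(2) nC n0 by auto
    have c1: "\<forall>w\<in>Fs1. \<bar>(\<integral>z'. G (w, z') \<partial>\<nu>) - (\<integral>z'. G (w, z') \<partial>\<nu>0)\<bar> < e'"
      using cond unfolding T_def by auto
    have c2: "\<forall>w\<in>Fs2. \<bar>(\<integral>z'. G' (w, z') \<partial>\<nu>) - (\<integral>z'. G' (w, z') \<partial>\<nu>0)\<bar> < e'"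
      using cond unfolding T_def by auto
    have B1: "\<forall>z\<in>K. \<bar>(\<integral>z'. G (z, z') \<partial>\<nu>) - (\<integral>z'. G (z, z') \<partial>\<nu>0)\<bar> \<le> 3 * e' + 2 * M0 * (measure \<nu> (-K) + measure \<nu>0 (-K))"
      using Fs1(2) N N0 c1 by blast
    have B2: "\<forall>z\<in>K. \<bar>(\<integral>z'. G' (z, z') \<partial>\<nu>) - (\<integral>z'. G' (z, z') \<partial>\<nu>0)\<bar> \<le> 3 * e' + 2 * M0 * (measure \<nu> (-K) + measure \<nu>0 (-K))"
      using Fs2(2) N N0 c2 by blast
    define c1 where "c1 = 3 * e' + 2 * M0 * (measure \<nu> (-K) + measure \<nu>0 (-K))"
    have c1pos: "c1 \<ge> 0" unfolding c1_def using e' M0 by simp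
    have c1le: "c1 \<le> 3 * e' + 4 * M0 * \<eta>"
    proof -
      have "2 * M0 * (measure \<nu> (-K) + measure \<nu>0 (-K)) \<le> 2 * M0 * (2 * \<eta>)"
        using mK M0 by (intro mult_left_mono) auto
      then show ?thesis unfolding c1_def by simp
    qed
    have A: "\<bar>\<integral>z. (\<integral>z'. G (z, z') \<partial>\<nu>) - (\<integral>z'. G (z, z') \<partial>\<nu>0) \<partial>\<nu>\<bar> \<le> c1 + 2 * M0 * measure \<nu> (-K)"
    proof (rule split_bound[OF N _ Kc])
      show "(\<lambda>z. (\<integral>z'. G (z, z') \<partial>\<nu>) - (\<integral>z'. G (z, z') \<partial>\<nu>0)) \<in> borel_measurable \<nu>"
        using H_meas[OF N(2) N Gc] H_meas[OF N(2) N0 Gc] by simp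
      show "\<bar>(\<integral>z'. G (z, z') \<partial>\<nu>) - (\<integral>z'. G (z, z') \<partial>\<nu>0)\<bar> \<le> c1" if "z \<in> K" for z
        using B1 that unfolding c1_def by blast
      show "\<bar>(\<integral>z'. G (z, z') \<partial>\<nu>) - (\<integral>z'. G (z, z') \<partial>\<nu>0)\<bar> \<le> 2 * M0" for z
        using H_bound[OF N Gc Gb, of z] H_bound[OF N0 Gc Gb, of z] by linarith
    qed (rule c1pos)
    have B: "\<bar>\<integral>z'. (\<integral>z. G (z, z') \<partial>\<nu>) - (\<integral>z. G (z, z') \<partial>\<nu>0) \<partial>\<nu>0\<bar> \<le> c1 + 2 * M0 * measure \<nu>0 (-K)"
    proof -
      have "\<bar>\<integral>z'. (\<integral>z. G' (z', z) \<partial>\<nu>) - (\<integral>z. G' (z', z) \<partial>\<nu>0) \<partial>\<nu>0\<bar> \<le> c1 + 2 * M0 * measure \<nu>0 (-K)"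
      proof (rule split_bound[OF N0 _ Kc])
        show "(\<lambda>z'. (\<integral>z. G' (z', z) \<partial>\<nu>) - (\<integral>z. G' (z', z) \<partial>\<nu>0)) \<in> borel_measurable \<nu>0"
          using H_meas[OF N0(2) N G'c] H_meas[OF N0(2) N0 G'c] by simp
        show "\<bar>(\<integral>z. G' (z', z) \<partial>\<nu>) - (\<integral>z. G' (z', z) \<partial>\<nu>0)\<bar> \<le> c1" if "z' \<in> K" for z'
          using B2 that unfolding c1_def by blast
        show "\<bar>(\<integral>z. G' (z', z) \<partial>\<nu>) - (\<integral>z. G' (z', z) \<partial>\<nu>0)\<bar> \<le> 2 * M0" for z'
          using H_bound[OF N G'c G'b, of z'] H_bound[OF N0 G'c G'b, of z'] by linarith
      qed (rule c1pos)
      then show ?thesis unfolding G'_def by simp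
    qed
    have "\<bar>(\<integral>u. G u \<partial>(\<nu> \<Otimes>\<^sub>M \<nu>)) - (\<integral>u. G u \<partial>(\<nu>0 \<Otimes>\<^sub>M \<nu>0))\<bar> \<le> 2 * c1 + 2 * M0 * measure \<nu> (-K) + 2 * M0 * measure \<nu>0 (-K)"
      using prod_split[OF N N0 Gc Gb] A B by simp
    also have "\<dots> \<le> 2 * (3 * e' + 4 * M0 * \<eta>) + 2 * M0 * \<eta> + 2 * M0 * \<eta>"
      using c1le mK M0 by (intro add_mono mult_left_mono) auto
    also have "\<dots> = e / 2 + 12 * M0 * \<eta>" unfolding e'_def by simp
    also have "\<dots> < e" using M0\<eta> by simp
    finally show "\<bar>(\<integral>u. G u \<partial>(\<nu> \<Otimes>\<^sub>M \<nu>)) - (\<integral>u. G u \<partial>(\<nu>0 \<Otimes>\<^sub>M \<nu>0))\<bar> < e" .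
  qed
qed

lemma coupling_D:
  assumes "\<nu> \<in> couplings \<mu>X \<mu>Y"
  shows "prob_space \<nu>" "sets \<nu> = sets borel"
    "\<And>A. A \<in> sets borel \<Longrightarrow> emeasure \<nu> (A \<times> UNIV) = emeasure \<mu>X A"
    "\<And>B. B \<in> sets borel \<Longrightarrow> emeasure \<nu> (UNIV \<times> B) = emeasure \<mu>Y B"
  using assms unfolding couplings_def by auto

lemma network_D:
  assumes "measure_network \<omega> \<mu>"
  shows "prob_space \<mu>" "sets \<mu> = sets borel" "\<exists>B. \<forall>z. \<bar>\<omega> z\<bar> \<le> B" "\<omega> \<in> borel_measurable borel"
  using assms unfolding measure_network_def by auto

lemma coupling_tight:
  fixes \<mu>X :: "'a::polish_space measure" and \<mu>Y :: "'b::polish_space measure"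
  assumes X: "measure_network \<omega>X \<mu>X" and Y: "measure_network \<omega>Y \<mu>Y" and \<eta>: "\<eta> > 0"
  shows "\<exists>K. compact K \<and> (\<forall>\<nu>\<in>couplings \<mu>X \<mu>Y. measure \<nu> (-K) \<le> \<eta>)"
proof -
  obtain KX where KX: "compact KX" "measure \<mu>X (-KX) < \<eta>/2"
    using tight[OF network_D(1,2)[OF X], of "\<eta>/2"] \<eta> by auto
  obtain KY where KY: "compact KY" "measure \<mu>Y (-KY) < \<eta>/2"
    using tight[OF network_D(1,2)[OF Y], of "\<eta>/2"] \<eta> by auto
  show ?thesis
  proof (intro exI[of _ "KX \<times> KY"] conjI ballI)
    show "compact (KX \<times> KY)" using KX KY by (simp add: compact_Times)
    fix \<nu> assume n: "\<nu> \<in> couplings \<mu>X \<mu>Y"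
    interpret prob_space \<nu> using coupling_D(1)[OF n] .
    have S: "sets \<nu> = sets borel" using coupling_D(2)[OF n] .
    have o1: "-KX \<in> sets borel" using KX(1) by (simp add: compact_imp_closed borel_open open_Compl)
    have o2: "-KY \<in> sets borel" using KY(1) by (simp add: compact_imp_closed borel_open open_Compl)
    have s1: "(-KX) \<times> UNIV \<in> sets \<nu>" using o1 S by (simp add: compact_imp_closed KX(1) borel_open open_Times open_Compl)
    have s2: "UNIV \<times> (-KY) \<in> sets \<nu>" using o2 S by (simp add: compact_imp_closed KY(1) borel_open open_Times open_Compl)
    have "measure \<nu> (-(KX \<times> KY)) \<le> measure \<nu> (((-KX) \<times> UNIV) \<union> (UNIV \<times> (-KY)))"
      by (rule finite_measure_mono) (use s1 s2 in auto)
    also have "\<dots> \<le> measure \<nu> ((-KX) \<times> UNIV) + measure \<nu> (UNIV \<times> (-KY))"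
      by (rule measure_subadditive[OF s1 s2]) auto
    also have "measure \<nu> ((-KX) \<times> UNIV) = measure \<mu>X (-KX)"
      unfolding measure_def using coupling_D(3)[OF n o1] by simp
    also have "measure \<nu> (UNIV \<times> (-KY)) = measure \<mu>Y (-KY)"
      unfolding measure_def using coupling_D(4)[OF n o2] by simp
    finally show "measure \<nu> (-(KX \<times> KY)) \<le> \<eta>" using KX(2) KY(2) by simp
  qed
qed

lemma marg_fst:
  fixes \<mu>X :: "'a::polish_space measure" and \<mu>Y :: "'b::polish_space measure"
  assumes X: "measure_network \<omega>X \<mu>X" and n: "\<nu> \<in> couplings \<mu>X \<mu>Y"
  shows "distr \<nu> borel fst = \<mu>X"
proof (rule measure_eqI)
  have S: "sets \<nu> = sets borel" using coupling_D(2)[OF n] .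
  have fm: "fst \<in> measurable \<nu> borel"
    using cont_meas[OF S, of fst] by (simp add: continuous_on_fst continuous_on_id)
  show "sets (distr \<nu> borel fst) = sets \<mu>X" using network_D(2)[OF X] by simp
  fix A assume "A \<in> sets (distr \<nu> borel fst)"
  then have A: "A \<in> sets borel" by simp
  have "emeasure (distr \<nu> borel fst) A = emeasure \<nu> (fst -` A \<inter> space \<nu>)" by (rule emeasure_distr[OF fm A])
  also have "fst -` A \<inter> space \<nu> = A \<times> UNIV" using space_borel_sets[OF S] by auto
  also have "emeasure \<nu> (A \<times> UNIV) = emeasure \<mu>X A" by (rule coupling_D(3)[OF n A])
  finally show "emeasure (distr \<nu> borel fst) A = emeasure \<mu>X A" .
qed

lemma marg_snd:
  fixes \<mu>X :: "'a::polish_space measure" and \<mu>Y :: "'b::polish_space measure"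
  assumes Y: "measure_network \<omega>Y \<mu>Y" and n: "\<nu> \<in> couplings \<mu>X \<mu>Y"
  shows "distr \<nu> borel snd = \<mu>Y"
proof (rule measure_eqI)
  have S: "sets \<nu> = sets borel" using coupling_D(2)[OF n] .
  have fm: "snd \<in> measurable \<nu> borel"
    using cont_meas[OF S, of snd] by (simp add: continuous_on_snd continuous_on_id)
  show "sets (distr \<nu> borel snd) = sets \<mu>Y" using network_D(2)[OF Y] by simp
  fix A assume "A \<in> sets (distr \<nu> borel snd)"
  then have A: "A \<in> sets borel" by simp
  have "emeasure (distr \<nu> borel snd) A = emeasure \<nu> (snd -` A \<inter> space \<nu>)" by (rule emeasure_distr[OF fm A])
  also have "snd -` A \<inter> space \<nu> = UNIV \<times> A" using space_borel_sets[OF S] by auto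
  also have "emeasure \<nu> (UNIV \<times> A) = emeasure \<mu>Y A" by (rule coupling_D(4)[OF n A])
  finally show "emeasure (distr \<nu> borel snd) A = emeasure \<mu>Y A" .
qed

lemma marg_int_fst:
  fixes \<mu>X :: "'a::polish_space measure" and \<mu>Y :: "'b::polish_space measure" and h :: "'a \<times> 'a \<Rightarrow> real"
  assumes X: "measure_network \<omega>X \<mu>X" and n: "\<nu> \<in> couplings \<mu>X \<mu>Y" and h: "h \<in> borel_measurable borel"
  shows "(\<integral>u. h (fst (fst u), fst (snd u)) \<partial>(\<nu> \<Otimes>\<^sub>M \<nu>)) = (\<integral>x. h x \<partial>(\<mu>X \<Otimes>\<^sub>M \<mu>X))"
proof -
  have S: "sets \<nu> = sets borel" using coupling_D(2)[OF n] .
  interpret prob_space \<nu> using coupling_D(1)[OF n] .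
  have fm: "fst \<in> measurable \<nu> borel"
    using cont_meas[OF S, of fst] by (simp add: continuous_on_fst continuous_on_id)
  interpret PX: prob_space \<mu>X using network_D(1)[OF X] .
  have sf: "sigma_finite_measure (distr \<nu> borel fst)" unfolding marg_fst[OF X n] by unfold_locales
  have "distr \<nu> borel fst \<Otimes>\<^sub>M distr \<nu> borel fst = distr (\<nu> \<Otimes>\<^sub>M \<nu>) (borel \<Otimes>\<^sub>M borel) (\<lambda>(x, y). (fst x, fst y))"
    by (rule pair_measure_distr[OF fm fm sf])
  then have eq: "\<mu>X \<Otimes>\<^sub>M \<mu>X = distr (\<nu> \<Otimes>\<^sub>M \<nu>) (borel \<Otimes>\<^sub>M borel) (\<lambda>(x, y). (fst x, fst y))"
    unfolding marg_fst[OF X n] .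
  have mm: "(\<lambda>(x, y). (fst x, fst y)) \<in> measurable (\<nu> \<Otimes>\<^sub>M \<nu>) (borel \<Otimes>\<^sub>M borel)"
    using fm by measurable
  have hm: "h \<in> borel_measurable (borel \<Otimes>\<^sub>M borel)" using h by (simp add: borel_prod)
  show ?thesis unfolding eq integral_distr[OF mm hm] by (simp add: split_beta')
qed

lemma marg_int_snd:
  fixes \<mu>X :: "'a::polish_space measure" and \<mu>Y :: "'b::polish_space measure" and h :: "'b \<times> 'b \<Rightarrow> real"
  assumes Y: "measure_network \<omega>Y \<mu>Y" and n: "\<nu> \<in> couplings \<mu>X \<mu>Y" and h: "h \<in> borel_measurable borel"
  shows "(\<integral>u. h (snd (fst u), snd (snd u)) \<partial>(\<nu> \<Otimes>\<^sub>M \<nu>)) = (\<integral>x. h x \<partial>(\<mu>Y \<Otimes>\<^sub>M \<mu>Y))"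
proof -
  have S: "sets \<nu> = sets borel" using coupling_D(2)[OF n] .
  interpret prob_space \<nu> using coupling_D(1)[OF n] .
  have fm: "snd \<in> measurable \<nu> borel"
    using cont_meas[OF S, of snd] by (simp add: continuous_on_snd continuous_on_id)
  interpret PY: prob_space \<mu>Y using network_D(1)[OF Y] .
  have sf: "sigma_finite_measure (distr \<nu> borel snd)" unfolding marg_snd[OF Y n] by unfold_locales
  have "distr \<nu> borel snd \<Otimes>\<^sub>M distr \<nu> borel snd = distr (\<nu> \<Otimes>\<^sub>M \<nu>) (borel \<Otimes>\<^sub>M borel) (\<lambda>(x, y). (snd x, snd y))"
    by (rule pair_measure_distr[OF fm fm sf])
  then have eq: "\<mu>Y \<Otimes>\<^sub>M \<mu>Y = distr (\<nu> \<Otimes>\<^sub>M \<nu>) (borel \<Otimes>\<^sub>M borel) (\<lambda>(x, y). (snd x, snd y))"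
    unfolding marg_snd[OF Y n] .
  have mm: "(\<lambda>(x, y). (snd x, snd y)) \<in> measurable (\<nu> \<Otimes>\<^sub>M \<nu>) (borel \<Otimes>\<^sub>M borel)"
    using fm by measurable
  have hm: "h \<in> borel_measurable (borel \<Otimes>\<^sub>M borel)" using h by (simp add: borel_prod)
  show ?thesis unfolding eq integral_distr[OF mm hm] by (simp add: split_beta')
qed

lemma pair_prob: "prob_space N \<Longrightarrow> prob_space (N \<Otimes>\<^sub>M N)"
proof -
  assume "prob_space N"
  then interpret A: prob_space N .
  interpret pair_prob_space N N ..
  show ?thesis by (rule P.prob_space_axioms)
qed

lemma pair_int:
  fixes f :: "('z::second_countable_topology) \<times> 'z \<Rightarrow> real"
  assumes N: "prob_space N" "sets N = sets borel" and fm: "f \<in> borel_measurable borel" and fb: "\<And>u. \<bar>f u\<bar> \<le> c"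
  shows "integrable (N \<Otimes>\<^sub>M N) f"
proof (rule bdd_integrable[OF prob_fin[OF pair_prob[OF N(1)]] _ fb])
  show "f \<in> borel_measurable (N \<Otimes>\<^sub>M N)"
    by (subst measurable_cong_sets[OF pair_sets_borel[OF N(2) N(2)] refl]) (rule fm)
qed

lemma map_fst_cont: "continuous_on UNIV (\<lambda>u::('a::topological_space \<times> 'b::topological_space) \<times> ('a \<times> 'b). (fst (fst u), fst (snd u)))"
  by (intro continuous_on_Pair continuous_on_fst continuous_on_snd continuous_on_id)

lemma map_snd_cont: "continuous_on UNIV (\<lambda>u::('a::topological_space \<times> 'b::topological_space) \<times> ('a \<times> 'b). (snd (fst u), snd (snd u)))"
  by (intro continuous_on_Pair continuous_on_fst continuous_on_snd continuous_on_id)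

lemma dis_p_cont:
  fixes \<omega>X :: "'a::polish_space \<times> 'a \<Rightarrow> real" and \<mu>X :: "'a measure"
    and \<omega>Y :: "'b::polish_space \<times> 'b \<Rightarrow> real" and \<mu>Y :: "'b measure" and p :: real
  assumes X: "measure_network \<omega>X \<mu>X" and Y: "measure_network \<omega>Y \<mu>Y" and p: "1 \<le> p"
  shows "continuous_map (subtopology narrow_topology (couplings \<mu>X \<mu>Y)) euclideanreal (dis_p p \<omega>X \<omega>Y)"
proof -
  define C where "C = couplings \<mu>X \<mu>Y"
  have CD: "\<And>\<nu>. \<nu> \<in> C \<Longrightarrow> prob_space \<nu> \<and> sets \<nu> = sets borel"
    unfolding C_def using coupling_D by blast
  obtain BX where BX: "\<And>z. \<bar>\<omega>X z\<bar> \<le> BX" using network_D(3)[OF X] by blast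
  obtain BY where BY: "\<And>z. \<bar>\<omega>Y z\<bar> \<le> BY" using network_D(3)[OF Y] by blast
  have BX0: "BX \<ge> 0" using BX[of undefined] by linarith
  have BY0: "BY \<ge> 0" using BY[of undefined] by linarith
  define R where "R = BX + BY"
  have R0: "R \<ge> 0" unfolding R_def using BX0 BY0 by simp
  define L where "L = p * R powr (p - 1)"
  have L0: "L \<ge> 0" unfolding L_def using p by simp
  define \<Delta>X where "\<Delta>X = (\<lambda>u::('a\<times>'b)\<times>('a\<times>'b). \<omega>X (fst (fst u), fst (snd u)))"
  define \<Delta>Y where "\<Delta>Y = (\<lambda>u::('a\<times>'b)\<times>('a\<times>'b). \<omega>Y (snd (fst u), snd (snd u)))"
  define D where "D = (\<lambda>u. \<bar>\<Delta>X u - \<Delta>Y u\<bar> powr p)"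
  define I where "I = (\<lambda>\<nu>. \<integral>u. D u \<partial>(\<nu> \<Otimes>\<^sub>M \<nu>))"
  have mDX: "\<Delta>X \<in> borel_measurable borel" unfolding \<Delta>X_def
    using measurable_compose[OF borel_measurable_continuous_onI[OF map_fst_cont] network_D(4)[OF X]] .
  have mDY: "\<Delta>Y \<in> borel_measurable borel" unfolding \<Delta>Y_def
    using measurable_compose[OF borel_measurable_continuous_onI[OF map_snd_cont] network_D(4)[OF Y]] .
  have mD: "D \<in> borel_measurable borel" unfolding D_def using mDX mDY by measurable
  have bD: "\<bar>\<Delta>X u - \<Delta>Y u\<bar> \<le> R" for u
    unfolding R_def \<Delta>X_def \<Delta>Y_def using BX[of "(fst (fst u), fst (snd u))"] BY[of "(snd (fst u), snd (snd u))"] by (smt (verit))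
  have Db: "\<bar>D u\<bar> \<le> R powr p" for u
    unfolding D_def using bD[of u] p by (simp add: powr_mono2)
  have loc: "\<exists>V. openin (subtopology narrow_topology C) V \<and> \<nu>0 \<in> V \<and> (\<forall>\<nu>\<in>V. \<bar>I \<nu> - I \<nu>0\<bar> < e)"
    if n0: "\<nu>0 \<in> C" and e: "e > 0" for \<nu>0 e
  proof -
    define \<eta> where "\<eta> = e / (6 * (L + 1))"
    have \<eta>: "\<eta> > 0" unfolding \<eta>_def using e L0 by simp
    have L\<eta>: "L * (\<eta> + \<eta>) < e / 3"
    proof -
      have Lp: "L + 1 > 0" using L0 by linarith
      have "(L + 1) * \<eta> = e / 6" unfolding \<eta>_def using Lp by (simp add: field_simps)
      moreover have "L * (\<eta> + \<eta>) < (L + 1) * (\<eta> + \<eta>)" using \<eta> by (intro mult_strict_right_mono) auto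
      ultimately show ?thesis by (simp add: algebra_simps)
    qed
    have SXX: "sets (\<mu>X \<Otimes>\<^sub>M \<mu>X) = sets borel" using pair_sets_borel network_D(2)[OF X] by blast
    have SYY: "sets (\<mu>Y \<Otimes>\<^sub>M \<mu>Y) = sets borel" using pair_sets_borel network_D(2)[OF Y] by blast
    have mX: "\<omega>X \<in> borel_measurable (\<mu>X \<Otimes>\<^sub>M \<mu>X)"
      by (subst measurable_cong_sets[OF SXX refl]) (rule network_D(4)[OF X])
    have mY: "\<omega>Y \<in> borel_measurable (\<mu>Y \<Otimes>\<^sub>M \<mu>Y)"
      by (subst measurable_cong_sets[OF SYY refl]) (rule network_D(4)[OF Y])
    obtain gX where gX: "continuous_on UNIV gX" "\<forall>x. \<bar>gX x\<bar> \<le> BX" "(\<integral>x. \<bar>\<omega>X x - gX x\<bar> \<partial>(\<mu>X \<Otimes>\<^sub>M \<mu>X)) < \<eta>"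
      using L1_approx_bounded[OF prob_fin[OF pair_prob[OF network_D(1)[OF X]]] SXX mX BX \<eta>] by blast
    obtain gY where gY: "continuous_on UNIV gY" "\<forall>x. \<bar>gY x\<bar> \<le> BY" "(\<integral>x. \<bar>\<omega>Y x - gY x\<bar> \<partial>(\<mu>Y \<Otimes>\<^sub>M \<mu>Y)) < \<eta>"
      using L1_approx_bounded[OF prob_fin[OF pair_prob[OF network_D(1)[OF Y]]] SYY mY BY \<eta>] by blast
    define GX where "GX = (\<lambda>u::('a\<times>'b)\<times>('a\<times>'b). gX (fst (fst u), fst (snd u)))"
    define GY where "GY = (\<lambda>u::('a\<times>'b)\<times>('a\<times>'b). gY (snd (fst u), snd (snd u)))"
    define G where "G = (\<lambda>u. \<bar>GX u - GY u\<bar> powr p)"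
    have GXc: "continuous_on UNIV GX" unfolding GX_def
      by (rule continuous_on_compose2[OF gX(1) map_fst_cont]) auto
    have GYc: "continuous_on UNIV GY" unfolding GY_def
      by (rule continuous_on_compose2[OF gY(1) map_snd_cont]) auto
    have Gc: "continuous_on UNIV G" unfolding G_def
      using p by (intro continuous_on_powr' continuous_intros GXc GYc) auto
    have bG: "\<bar>GX u - GY u\<bar> \<le> R" for u
      unfolding R_def GX_def GY_def using gX(2)[rule_format, of "(fst (fst u), fst (snd u))"] gY(2)[rule_format, of "(snd (fst u), snd (snd u))"] by (smt (verit))
    have Gb: "\<bar>G u\<bar> \<le> R powr p" for u
      unfolding G_def using bG[of u] p by (simp add: powr_mono2)
    have mG: "G \<in> borel_measurable borel" by (rule borel_measurable_continuous_onI[OF Gc])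
    have mGX: "GX \<in> borel_measurable borel" by (rule borel_measurable_continuous_onI[OF GXc])
    have mGY: "GY \<in> borel_measurable borel" by (rule borel_measurable_continuous_onI[OF GYc])
    have approx: "\<bar>I \<nu> - (\<integral>u. G u \<partial>(\<nu> \<Otimes>\<^sub>M \<nu>))\<bar> < e / 3" if n: "\<nu> \<in> C" for \<nu>
    proof -
      have N: "prob_space \<nu>" "sets \<nu> = sets borel" using CD[OF n] by auto
      have nc: "\<nu> \<in> couplings \<mu>X \<mu>Y" using n unfolding C_def .
      have iD: "integrable (\<nu> \<Otimes>\<^sub>M \<nu>) D" by (rule pair_int[OF N mD Db])
      have iG: "integrable (\<nu> \<Otimes>\<^sub>M \<nu>) G" by (rule pair_int[OF N mG Gb])
      have iEX: "integrable (\<nu> \<Otimes>\<^sub>M \<nu>) (\<lambda>u. \<bar>\<Delta>X u - GX u\<bar>)"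
      proof (rule pair_int[OF N, where c="BX + BX"])
        show "\<bar>\<bar>\<Delta>X u - GX u\<bar>\<bar> \<le> BX + BX" for u
          unfolding \<Delta>X_def GX_def using BX[of "(fst (fst u), fst (snd u))"] gX(2)[rule_format, of "(fst (fst u), fst (snd u))"] by (smt (verit))
      qed (use mDX mGX in measurable)
      have iEY: "integrable (\<nu> \<Otimes>\<^sub>M \<nu>) (\<lambda>u. \<bar>\<Delta>Y u - GY u\<bar>)"
      proof (rule pair_int[OF N, where c="BY + BY"])
        show "\<bar>\<bar>\<Delta>Y u - GY u\<bar>\<bar> \<le> BY + BY" for u
          unfolding \<Delta>Y_def GY_def using BY[of "(snd (fst u), snd (snd u))"] gY(2)[rule_format, of "(snd (fst u), snd (snd u))"] by (smt (verit))
      qed (use mDY mGY in measurable)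
      have "I \<nu> - (\<integral>u. G u \<partial>(\<nu> \<Otimes>\<^sub>M \<nu>)) = (\<integral>u. D u - G u \<partial>(\<nu> \<Otimes>\<^sub>M \<nu>))"
        unfolding I_def by (rule Bochner_Integration.integral_diff[OF iD iG, symmetric])
      also have "\<bar>\<dots>\<bar> \<le> (\<integral>u. \<bar>D u - G u\<bar> \<partial>(\<nu> \<Otimes>\<^sub>M \<nu>))" by (rule integral_abs_bound)
      also have "\<dots> \<le> (\<integral>u. L * (\<bar>\<Delta>X u - GX u\<bar> + \<bar>\<Delta>Y u - GY u\<bar>) \<partial>(\<nu> \<Otimes>\<^sub>M \<nu>))"
      proof (rule integral_mono)
        show "integrable (\<nu> \<Otimes>\<^sub>M \<nu>) (\<lambda>u. \<bar>D u - G u\<bar>)" using iD iG by auto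
        show "integrable (\<nu> \<Otimes>\<^sub>M \<nu>) (\<lambda>u. L * (\<bar>\<Delta>X u - GX u\<bar> + \<bar>\<Delta>Y u - GY u\<bar>))" using iEX iEY by auto
        fix u
        have "\<bar>D u - G u\<bar> \<le> L * \<bar>\<bar>\<Delta>X u - \<Delta>Y u\<bar> - \<bar>GX u - GY u\<bar>\<bar>"
          unfolding D_def G_def L_def by (rule powr_lip[OF p]) (use bD bG in auto)
        also have "\<dots> \<le> L * (\<bar>\<Delta>X u - GX u\<bar> + \<bar>\<Delta>Y u - GY u\<bar>)"
          by (rule mult_left_mono[OF _ L0]) linarith
        finally show "\<bar>D u - G u\<bar> \<le> L * (\<bar>\<Delta>X u - GX u\<bar> + \<bar>\<Delta>Y u - GY u\<bar>)" .
      qed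
      also have "\<dots> = L * ((\<integral>u. \<bar>\<Delta>X u - GX u\<bar> \<partial>(\<nu> \<Otimes>\<^sub>M \<nu>)) + (\<integral>u. \<bar>\<Delta>Y u - GY u\<bar> \<partial>(\<nu> \<Otimes>\<^sub>M \<nu>)))"
        using iEX iEY by simp
      also have "(\<integral>u. \<bar>\<Delta>X u - GX u\<bar> \<partial>(\<nu> \<Otimes>\<^sub>M \<nu>)) = (\<integral>x. \<bar>\<omega>X x - gX x\<bar> \<partial>(\<mu>X \<Otimes>\<^sub>M \<mu>X))"
        unfolding \<Delta>X_def GX_def
        by (rule marg_int_fst[OF X nc, of "\<lambda>x. \<bar>\<omega>X x - gX x\<bar>"])
           (use network_D(4)[OF X] borel_measurable_continuous_onI[OF gX(1)] in measurable)
      also have "(\<integral>u. \<bar>\<Delta>Y u - GY u\<bar> \<partial>(\<nu> \<Otimes>\<^sub>M \<nu>)) = (\<integral>x. \<bar>\<omega>Y x - gY x\<bar> \<partial>(\<mu>Y \<Otimes>\<^sub>M \<mu>Y))"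
        unfolding \<Delta>Y_def GY_def
        by (rule marg_int_snd[OF Y nc, of "\<lambda>x. \<bar>\<omega>Y x - gY x\<bar>"])
           (use network_D(4)[OF Y] borel_measurable_continuous_onI[OF gY(1)] in measurable)
      also have "L * ((\<integral>x. \<bar>\<omega>X x - gX x\<bar> \<partial>(\<mu>X \<Otimes>\<^sub>M \<mu>X)) + (\<integral>x. \<bar>\<omega>Y x - gY x\<bar> \<partial>(\<mu>Y \<Otimes>\<^sub>M \<mu>Y))) \<le> L * (\<eta> + \<eta>)"
        using gX(3) gY(3) L0 by (intro mult_left_mono) auto
      finally show ?thesis using L\<eta> by linarith
    qed
    have tightC: "\<exists>K. compact K \<and> (\<forall>\<nu>\<in>C. measure \<nu> (-K) \<le> \<eta>')" if "\<eta>' > 0" for \<eta>'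
      unfolding C_def by (rule coupling_tight[OF X Y that])
    obtain V where V: "openin (subtopology narrow_topology C) V" "\<nu>0 \<in> V"
      "\<forall>\<nu>\<in>V. \<bar>(\<integral>u. G u \<partial>(\<nu> \<Otimes>\<^sub>M \<nu>)) - (\<integral>u. G u \<partial>(\<nu>0 \<Otimes>\<^sub>M \<nu>0))\<bar> < e / 3"
      using prod_cont_local[OF Gc Gb CD tightC n0, of "e/3"] e by auto
    have VC: "V \<subseteq> C" using openin_subset[OF V(1)] by simp
    show ?thesis
    proof (intro exI[of _ V] conjI ballI V(1) V(2))
      fix \<nu> assume nV: "\<nu> \<in> V"
      then have nC: "\<nu> \<in> C" using VC by auto
      have "\<bar>(\<integral>u. G u \<partial>(\<nu> \<Otimes>\<^sub>M \<nu>)) - (\<integral>u. G u \<partial>(\<nu>0 \<Otimes>\<^sub>M \<nu>0))\<bar> < e / 3" using V(3) nV by blast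
      then show "\<bar>I \<nu> - I \<nu>0\<bar> < e" using approx[OF nC] approx[OF n0] by linarith
    qed
  qed
  have Ic: "continuous_map (subtopology narrow_topology C) euclideanreal I"
    by (rule local_to_cont) (use loc in blast)
  have Inn: "I \<nu> \<ge> 0" for \<nu> unfolding I_def D_def by simp
  have Ic': "continuous_map (subtopology narrow_topology C) (top_of_set {0..}) I"
    using Ic Inn by (auto simp: continuous_map_in_subtopology)
  have pc: "continuous_map (top_of_set {0..}) euclideanreal (\<lambda>t::real. t powr (1 / p))"
    using p by (simp, intro continuous_on_powr' continuous_intros) auto
  have "continuous_map (subtopology narrow_topology C) euclideanreal ((\<lambda>t::real. t powr (1 / p)) \<circ> I)"
    by (rule continuous_map_compose[OF Ic' pc])
  moreover have "(\<lambda>t::real. t powr (1 / p)) \<circ> I = dis_p p \<omega>X \<omega>Y"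
    unfolding I_def D_def \<Delta>X_def \<Delta>Y_def dis_p_def by (simp add: comp_def)
  ultimately show ?thesis unfolding C_def by simp
qed

lemma ess_lt:
  fixes g :: "'c \<Rightarrow> real"
  assumes P: "prob_space M" and gm: "g \<in> borel_measurable M" and t: "t < esssup M (\<lambda>x. ereal (g x))"
  shows "\<exists>r. t < ereal r \<and> measure M {x \<in> space M. g x > r} > 0"
proof -
  interpret prob_space M by fact
  obtain y where y: "t < y" "y < esssup M (\<lambda>x. ereal (g x))" using t dense by blast
  obtain r where r: "y = ereal r" using y by (cases y) auto
  have "(\<lambda>x. ereal (g x)) \<in> borel_measurable M" using gm by measurable
  then have "emeasure M {x \<in> space M. ereal (g x) > ereal r} > 0"
    using esssup_pos_measure y(2) r by blast
  then have "emeasure M {x \<in> space M. g x > r} > 0" by simp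
  moreover have "{x \<in> space M. g x > r} \<in> sets M" using gm by measurable
  ultimately have "measure M {x \<in> space M. g x > r} > 0"
    by (simp add: emeasure_eq_measure)
  then show ?thesis using y r by blast
qed

lemma ess_gt:
  fixes g :: "'c \<Rightarrow> real"
  assumes P: "prob_space M" and gm: "g \<in> borel_measurable M" and pos: "measure M {x \<in> space M. g x > c} > 0"
  shows "ereal c < esssup M (\<lambda>x. ereal (g x))"
proof (rule ccontr)
  interpret prob_space M by fact
  assume "\<not> ereal c < esssup M (\<lambda>x. ereal (g x))"
  then have le: "esssup M (\<lambda>x. ereal (g x)) \<le> ereal c" by simp
  have "AE x in M. ereal (g x) \<le> esssup M (\<lambda>x. ereal (g x))" by (rule esssup_AE)
  then have "AE x in M. g x \<le> c"
  proof (rule eventually_mono)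
    fix x assume "ereal (g x) \<le> esssup M (\<lambda>x. ereal (g x))"
    then have "ereal (g x) \<le> ereal c" using le by (rule order_trans)
    then show "g x \<le> c" by simp
  qed
  moreover have "{x \<in> space M. g x > c} \<in> sets M" using gm by measurable
  ultimately have "emeasure M {x \<in> space M. g x > c} = 0"
    using AE_iff_measurable[of "{x \<in> space M. g x > c}" M "\<lambda>x. g x \<le> c"] by (simp add: not_le)
  then show False using pos by (simp add: emeasure_eq_measure)
qed

lemma int_le3:
  fixes a b c d :: "'c \<Rightarrow> real"
  assumes "integrable M a" "integrable M b" "integrable M c" "integrable M d"
    and "\<And>u. a u \<le> b u + c u / s + d u / s"
  shows "(\<integral>u. a u \<partial>M) \<le> (\<integral>u. b u \<partial>M) + (\<integral>u. c u \<partial>M) / s + (\<integral>u. d u \<partial>M) / s"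
proof -
  have "(\<integral>u. a u \<partial>M) \<le> (\<integral>u. b u + c u / s + d u / s \<partial>M)"
    using assms by (intro integral_mono) auto
  also have "\<dots> = (\<integral>u. b u \<partial>M) + (\<integral>u. c u \<partial>M) / s + (\<integral>u. d u \<partial>M) / s"
    using assms by simp
  finally show ?thesis .
qed

lemma dis_inf_lsc:
  fixes \<omega>X :: "'a::polish_space \<times> 'a \<Rightarrow> real" and \<mu>X :: "'a measure"
    and \<omega>Y :: "'b::polish_space \<times> 'b \<Rightarrow> real" and \<mu>Y :: "'b measure"
  assumes X: "measure_network \<omega>X \<mu>X" and Y: "measure_network \<omega>Y \<mu>Y"
  shows "lower_semicontinuous_map (subtopology narrow_topology (couplings \<mu>X \<mu>Y)) (dis_inf \<omega>X \<omega>Y)"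
  unfolding lower_semicontinuous_map_def
proof
  fix t :: ereal
  define C where "C = couplings \<mu>X \<mu>Y"
  have CD: "\<And>\<nu>. \<nu> \<in> C \<Longrightarrow> prob_space \<nu> \<and> sets \<nu> = sets borel"
    unfolding C_def using coupling_D by blast
  obtain BX where BX: "\<And>z. \<bar>\<omega>X z\<bar> \<le> BX" using network_D(3)[OF X] by blast
  obtain BY where BY: "\<And>z. \<bar>\<omega>Y z\<bar> \<le> BY" using network_D(3)[OF Y] by blast
  define \<Delta>X where "\<Delta>X = (\<lambda>u::('a\<times>'b)\<times>('a\<times>'b). \<omega>X (fst (fst u), fst (snd u)))"
  define \<Delta>Y where "\<Delta>Y = (\<lambda>u::('a\<times>'b)\<times>('a\<times>'b). \<omega>Y (snd (fst u), snd (snd u)))"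
  define A where "A = (\<lambda>u. \<bar>\<Delta>X u - \<Delta>Y u\<bar>)"
  have mDX: "\<Delta>X \<in> borel_measurable borel" unfolding \<Delta>X_def
    using measurable_compose[OF borel_measurable_continuous_onI[OF map_fst_cont] network_D(4)[OF X]] .
  have mDY: "\<Delta>Y \<in> borel_measurable borel" unfolding \<Delta>Y_def
    using measurable_compose[OF borel_measurable_continuous_onI[OF map_snd_cont] network_D(4)[OF Y]] .
  have mA: "A \<in> borel_measurable borel" unfolding A_def using mDX mDY by measurable
  have sp: "space (\<nu> \<Otimes>\<^sub>M \<nu>) = UNIV" if "\<nu> \<in> C" for \<nu>
  proof -
    have "space \<nu> = UNIV" using CD[OF that] space_borel_sets by blast
    then show ?thesis by (simp add: space_pair_measure)
  qed
  have mAN: "A \<in> borel_measurable (\<nu> \<Otimes>\<^sub>M \<nu>)" if "\<nu> \<in> C" for \<nu>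
    using CD[OF that] by (subst measurable_cong_sets[OF pair_sets_borel refl]) (auto intro: mA)
  have Aset: "{u. A u > c} \<in> sets borel" for c
  proof -
    have "{u \<in> space borel. A u > c} \<in> sets borel" using mA by measurable
    then show ?thesis by simp
  qed
  have disE: "dis_inf \<omega>X \<omega>Y \<nu> = esssup (\<nu> \<Otimes>\<^sub>M \<nu>) (\<lambda>u. ereal (A u))" for \<nu>
    unfolding dis_inf_def A_def \<Delta>X_def \<Delta>Y_def by simp
  have top: "topspace (subtopology narrow_topology C) = C" by (simp add: narrow_topspace)
  show "openin (subtopology narrow_topology (couplings \<mu>X \<mu>Y))
      {x \<in> topspace (subtopology narrow_topology (couplings \<mu>X \<mu>Y)). t < dis_inf \<omega>X \<omega>Y x}"
    unfolding C_def[symmetric] top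
  proof (subst openin_subopen, intro ballI)
    fix \<nu>0 assume "\<nu>0 \<in> {x \<in> C. t < dis_inf \<omega>X \<omega>Y x}"
    then have n0: "\<nu>0 \<in> C" and t0: "t < esssup (\<nu>0 \<Otimes>\<^sub>M \<nu>0) (\<lambda>u. ereal (A u))"
      using disE by auto
    have N0: "prob_space \<nu>0" "sets \<nu>0 = sets borel" using CD[OF n0] by auto
    obtain r where r: "t < ereal r" "measure (\<nu>0 \<Otimes>\<^sub>M \<nu>0) {u \<in> space (\<nu>0 \<Otimes>\<^sub>M \<nu>0). A u > r} > 0"
      using ess_lt[OF pair_prob[OF N0(1)] mAN[OF n0] t0] by blast
    obtain y1 where y1: "t < y1" "y1 < ereal r" using r(1) dense by blast
    obtain t1 where t1: "y1 = ereal t1" using y1 by (cases y1) auto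
    have t1r: "t1 < r" using y1(2) t1 by simp
    define s where "s = (r - t1) / 6"
    have s: "s > 0" unfolding s_def using t1r by simp
    define \<delta> where "\<delta> = measure (\<nu>0 \<Otimes>\<^sub>M \<nu>0) {u. A u > r}"
    have \<delta>: "\<delta> > 0" using r(2) sp[OF n0] unfolding \<delta>_def by simp
    define \<eta> where "\<eta> = \<delta> * s / 16"
    have \<eta>: "\<eta> > 0" unfolding \<eta>_def using \<delta> s by simp
    have \<eta>s: "\<eta> / s = \<delta> / 16" unfolding \<eta>_def using s by (simp add: field_simps)
    have SXX: "sets (\<mu>X \<Otimes>\<^sub>M \<mu>X) = sets borel" using pair_sets_borel network_D(2)[OF X] by blast
    have SYY: "sets (\<mu>Y \<Otimes>\<^sub>M \<mu>Y) = sets borel" using pair_sets_borel network_D(2)[OF Y] by blast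
    have mX: "\<omega>X \<in> borel_measurable (\<mu>X \<Otimes>\<^sub>M \<mu>X)"
      by (subst measurable_cong_sets[OF SXX refl]) (rule network_D(4)[OF X])
    have mY: "\<omega>Y \<in> borel_measurable (\<mu>Y \<Otimes>\<^sub>M \<mu>Y)"
      by (subst measurable_cong_sets[OF SYY refl]) (rule network_D(4)[OF Y])
    obtain gX where gX: "continuous_on UNIV gX" "\<forall>x. \<bar>gX x\<bar> \<le> BX" "(\<integral>x. \<bar>\<omega>X x - gX x\<bar> \<partial>(\<mu>X \<Otimes>\<^sub>M \<mu>X)) < \<eta>"
      using L1_approx_bounded[OF prob_fin[OF pair_prob[OF network_D(1)[OF X]]] SXX mX BX \<eta>] by blast
    obtain gY where gY: "continuous_on UNIV gY" "\<forall>x. \<bar>gY x\<bar> \<le> BY" "(\<integral>x. \<bar>\<omega>Y x - gY x\<bar> \<partial>(\<mu>Y \<Otimes>\<^sub>M \<mu>Y)) < \<eta>"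
      using L1_approx_bounded[OF prob_fin[OF pair_prob[OF network_D(1)[OF Y]]] SYY mY BY \<eta>] by blast
    define GX where "GX = (\<lambda>u::('a\<times>'b)\<times>('a\<times>'b). gX (fst (fst u), fst (snd u)))"
    define GY where "GY = (\<lambda>u::('a\<times>'b)\<times>('a\<times>'b). gY (snd (fst u), snd (snd u)))"
    have GXc: "continuous_on UNIV GX" unfolding GX_def
      by (rule continuous_on_compose2[OF gX(1) map_fst_cont]) auto
    have GYc: "continuous_on UNIV GY" unfolding GY_def
      by (rule continuous_on_compose2[OF gY(1) map_snd_cont]) auto
    define Gs where "Gs = (\<lambda>u. min 1 (max 0 ((\<bar>GX u - GY u\<bar> - (r - 3 * s)) / s)))"
    have Gsc: "continuous_on UNIV Gs" unfolding Gs_def using GXc GYc s by (intro continuous_intros) auto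
    have Gsb: "\<bar>Gs u\<bar> \<le> 1" for u unfolding Gs_def by auto
    define eX where "eX = (\<lambda>u. \<bar>\<Delta>X u - GX u\<bar>)"
    define eY where "eY = (\<lambda>u. \<bar>\<Delta>Y u - GY u\<bar>)"
    have mGX: "GX \<in> borel_measurable borel" by (rule borel_measurable_continuous_onI[OF GXc])
    have mGY: "GY \<in> borel_measurable borel" by (rule borel_measurable_continuous_onI[OF GYc])
    have meX: "eX \<in> borel_measurable borel" unfolding eX_def using mDX mGX by measurable
    have meY: "eY \<in> borel_measurable borel" unfolding eY_def using mDY mGY by measurable
    have beX: "\<bar>eX u\<bar> \<le> BX + BX" for u
      unfolding eX_def \<Delta>X_def GX_def using BX[of "(fst (fst u), fst (snd u))"] gX(2)[rule_format, of "(fst (fst u), fst (snd u))"] by (smt (verit))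
    have beY: "\<bar>eY u\<bar> \<le> BY + BY" for u
      unfolding eY_def \<Delta>Y_def GY_def using BY[of "(snd (fst u), snd (snd u))"] gY(2)[rule_format, of "(snd (fst u), snd (snd u))"] by (smt (verit))
    have ints: "integrable (\<nu> \<Otimes>\<^sub>M \<nu>) eX" "integrable (\<nu> \<Otimes>\<^sub>M \<nu>) eY" "integrable (\<nu> \<Otimes>\<^sub>M \<nu>) Gs"
      "integrable (\<nu> \<Otimes>\<^sub>M \<nu>) (indicator {u. A u > c} :: _ \<Rightarrow> real)"
      if "\<nu> \<in> C" for \<nu> c
    proof -
      have N: "prob_space \<nu>" "sets \<nu> = sets borel" using CD[OF that] by auto
      show "integrable (\<nu> \<Otimes>\<^sub>M \<nu>) eX" by (rule pair_int[OF N meX beX])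
      show "integrable (\<nu> \<Otimes>\<^sub>M \<nu>) eY" by (rule pair_int[OF N meY beY])
      show "integrable (\<nu> \<Otimes>\<^sub>M \<nu>) Gs" by (rule pair_int[OF N borel_measurable_continuous_onI[OF Gsc] Gsb])
      show "integrable (\<nu> \<Otimes>\<^sub>M \<nu>) (indicator {u. A u > c} :: _ \<Rightarrow> real)"
        by (rule pair_int[OF N, where c=1]) (use Aset[of c] in auto)
    qed
    have eXi: "(\<integral>u. eX u \<partial>(\<nu> \<Otimes>\<^sub>M \<nu>)) / s < \<delta> / 16" if "\<nu> \<in> C" for \<nu>
    proof -
      have nc: "\<nu> \<in> couplings \<mu>X \<mu>Y" using that unfolding C_def .
      have "(\<integral>u. eX u \<partial>(\<nu> \<Otimes>\<^sub>M \<nu>)) = (\<integral>x. \<bar>\<omega>X x - gX x\<bar> \<partial>(\<mu>X \<Otimes>\<^sub>M \<mu>X))"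
        unfolding eX_def \<Delta>X_def GX_def
        by (rule marg_int_fst[OF X nc, of "\<lambda>x. \<bar>\<omega>X x - gX x\<bar>"])
           (use network_D(4)[OF X] borel_measurable_continuous_onI[OF gX(1)] in measurable)
      then have "(\<integral>u. eX u \<partial>(\<nu> \<Otimes>\<^sub>M \<nu>)) < \<eta>" using gX(3) by simp
      then have "(\<integral>u. eX u \<partial>(\<nu> \<Otimes>\<^sub>M \<nu>)) / s < \<eta> / s" using s by (simp add: divide_strict_right_mono)
      then show ?thesis using \<eta>s by simp
    qed
    have eYi: "(\<integral>u. eY u \<partial>(\<nu> \<Otimes>\<^sub>M \<nu>)) / s < \<delta> / 16" if "\<nu> \<in> C" for \<nu>
    proof -
      have nc: "\<nu> \<in> couplings \<mu>X \<mu>Y" using that unfolding C_def .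
      have "(\<integral>u. eY u \<partial>(\<nu> \<Otimes>\<^sub>M \<nu>)) = (\<integral>x. \<bar>\<omega>Y x - gY x\<bar> \<partial>(\<mu>Y \<Otimes>\<^sub>M \<mu>Y))"
        unfolding eY_def \<Delta>Y_def GY_def
        by (rule marg_int_snd[OF Y nc, of "\<lambda>x. \<bar>\<omega>Y x - gY x\<bar>"])
           (use network_D(4)[OF Y] borel_measurable_continuous_onI[OF gY(1)] in measurable)
      then have "(\<integral>u. eY u \<partial>(\<nu> \<Otimes>\<^sub>M \<nu>)) < \<eta>" using gY(3) by simp
      then have "(\<integral>u. eY u \<partial>(\<nu> \<Otimes>\<^sub>M \<nu>)) / s < \<eta> / s" using s by (simp add: divide_strict_right_mono)
      then show ?thesis using \<eta>s by simp
    qed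
    have triX: "\<bar>GX u - GY u\<bar> \<ge> A u - eX u - eY u" "\<bar>GX u - GY u\<bar> \<le> A u + eX u + eY u" for u
      unfolding A_def eX_def eY_def by linarith+
    have pw1: "indicator {u. A u > r} u \<le> Gs u + eX u / s + eY u / s" for u
    proof -
      have g0: "Gs u \<ge> 0" unfolding Gs_def by simp
      have e0: "eX u / s \<ge> 0" "eY u / s \<ge> 0" unfolding eX_def eY_def using s by auto
      consider "A u \<le> r" | "eX u \<ge> s" | "eY u \<ge> s" | "A u > r" "eX u < s" "eY u < s" by linarith
      then show ?thesis
      proof cases
        case 1 then show ?thesis using g0 e0 by (simp add: indicator_def)
      next
        case 2 then have "eX u / s \<ge> 1" using s by simp
        then show ?thesis using g0 e0 by (simp add: indicator_def split: if_splits)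
      next
        case 3 then have "eY u / s \<ge> 1" using s by simp
        then show ?thesis using g0 e0 by (simp add: indicator_def split: if_splits)
      next
        case 4
        then have "\<bar>GX u - GY u\<bar> > r - 2 * s" using triX(1)[of u] by linarith
        then have "(\<bar>GX u - GY u\<bar> - (r - 3 * s)) / s \<ge> 1" using s by (simp add: field_simps)
        then have "Gs u = 1" unfolding Gs_def by simp
        then show ?thesis using e0 by (simp add: indicator_def)
      qed
    qed
    have pw2: "Gs u \<le> indicator {u. A u > r - 5 * s} u + eX u / s + eY u / s" for u
    proof -
      have g1: "Gs u \<le> 1" unfolding Gs_def by simp
      have e0: "eX u / s \<ge> 0" "eY u / s \<ge> 0" unfolding eX_def eY_def using s by auto
      have i0: "indicator {u. A u > r - 5 * s} u \<ge> (0::real)" by simp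
      consider "Gs u \<le> 0" | "eX u \<ge> s" | "eY u \<ge> s" | "Gs u > 0" "eX u < s" "eY u < s" by linarith
      then show ?thesis
      proof cases
        case 1 then show ?thesis using e0 i0 by linarith
      next
        case 2 then have "eX u / s \<ge> 1" using s by simp
        then show ?thesis using g1 e0 i0 by linarith
      next
        case 3 then have "eY u / s \<ge> 1" using s by simp
        then show ?thesis using g1 e0 i0 by linarith
      next
        case 4
        have "(\<bar>GX u - GY u\<bar> - (r - 3 * s)) / s > 0"
        proof (rule ccontr)
          assume "\<not> ?thesis"
          then have "(\<bar>GX u - GY u\<bar> - (r - 3 * s)) / s \<le> 0" by simp
          then have "Gs u = 0" unfolding Gs_def by simp
          then show False using 4(1) by simp
        qed
        then have "\<bar>GX u - GY u\<bar> > r - 3 * s" using s by (simp add: field_simps)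
        then have "A u > r - 5 * s" using triX(2)[of u] 4 by linarith
        then show ?thesis using g1 e0 by (simp add: indicator_def)
      qed
    qed
    have tightC: "\<exists>K. compact K \<and> (\<forall>\<nu>\<in>C. measure \<nu> (-K) \<le> \<eta>')" if "\<eta>' > 0" for \<eta>'
      unfolding C_def by (rule coupling_tight[OF X Y that])
    obtain V where V: "openin (subtopology narrow_topology C) V" "\<nu>0 \<in> V"
      "\<forall>\<nu>\<in>V. \<bar>(\<integral>u. Gs u \<partial>(\<nu> \<Otimes>\<^sub>M \<nu>)) - (\<integral>u. Gs u \<partial>(\<nu>0 \<Otimes>\<^sub>M \<nu>0))\<bar> < \<delta> / 4"
      using prod_cont_local[OF Gsc Gsb CD tightC n0, of "\<delta>/4"] \<delta> by auto
    have VC: "V \<subseteq> C" using openin_subset[OF V(1)] by (simp add: top)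
    have low0: "\<delta> \<le> (\<integral>u. Gs u \<partial>(\<nu>0 \<Otimes>\<^sub>M \<nu>0)) + (\<integral>u. eX u \<partial>(\<nu>0 \<Otimes>\<^sub>M \<nu>0)) / s + (\<integral>u. eY u \<partial>(\<nu>0 \<Otimes>\<^sub>M \<nu>0)) / s"
    proof -
      have "(\<integral>u. indicator {u. A u > r} u \<partial>(\<nu>0 \<Otimes>\<^sub>M \<nu>0)) \<le> (\<integral>u. Gs u \<partial>(\<nu>0 \<Otimes>\<^sub>M \<nu>0)) + (\<integral>u. eX u \<partial>(\<nu>0 \<Otimes>\<^sub>M \<nu>0)) / s + (\<integral>u. eY u \<partial>(\<nu>0 \<Otimes>\<^sub>M \<nu>0)) / s"
        by (rule int_le3[OF ints(4)[OF n0] ints(3)[OF n0] ints(1)[OF n0] ints(2)[OF n0] pw1])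
      moreover have "(\<integral>u. indicator {u. A u > r} u \<partial>(\<nu>0 \<Otimes>\<^sub>M \<nu>0)) = \<delta>"
        unfolding \<delta>_def using sp[OF n0] by simp
      ultimately show ?thesis by simp
    qed
    show "\<exists>T. openin (subtopology narrow_topology C) T \<and> \<nu>0 \<in> T \<and> T \<subseteq> {x \<in> C. t < dis_inf \<omega>X \<omega>Y x}"
    proof (intro exI[of _ V] conjI V(1) V(2) subsetI)
      fix \<nu> assume nV: "\<nu> \<in> V"
      then have nC: "\<nu> \<in> C" using VC by auto
      have N: "prob_space \<nu>" "sets \<nu> = sets borel" using CD[OF nC] by auto
      define m where "m = measure (\<nu> \<Otimes>\<^sub>M \<nu>) {u. A u > r - 5 * s}"
      have up: "(\<integral>u. Gs u \<partial>(\<nu> \<Otimes>\<^sub>M \<nu>)) \<le> m + (\<integral>u. eX u \<partial>(\<nu> \<Otimes>\<^sub>M \<nu>)) / s + (\<integral>u. eY u \<partial>(\<nu> \<Otimes>\<^sub>M \<nu>)) / s"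
      proof -
        have "(\<integral>u. Gs u \<partial>(\<nu> \<Otimes>\<^sub>M \<nu>)) \<le> (\<integral>u. indicator {u. A u > r - 5 * s} u \<partial>(\<nu> \<Otimes>\<^sub>M \<nu>)) + (\<integral>u. eX u \<partial>(\<nu> \<Otimes>\<^sub>M \<nu>)) / s + (\<integral>u. eY u \<partial>(\<nu> \<Otimes>\<^sub>M \<nu>)) / s"
          by (rule int_le3[OF ints(3)[OF nC] ints(4)[OF nC] ints(1)[OF nC] ints(2)[OF nC] pw2])
        moreover have "(\<integral>u. indicator {u. A u > r - 5 * s} u \<partial>(\<nu> \<Otimes>\<^sub>M \<nu>)) = m"
          unfolding m_def using sp[OF nC] by simp
        ultimately show ?thesis by simp
      qed
      have cl: "\<bar>(\<integral>u. Gs u \<partial>(\<nu> \<Otimes>\<^sub>M \<nu>)) - (\<integral>u. Gs u \<partial>(\<nu>0 \<Otimes>\<^sub>M \<nu>0))\<bar> < \<delta> / 4" using V(3) nV by blast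
      have "m > 0" using up cl low0 eXi[OF nC] eYi[OF nC] eXi[OF n0] eYi[OF n0] \<delta> by linarith
      then have "measure (\<nu> \<Otimes>\<^sub>M \<nu>) {u \<in> space (\<nu> \<Otimes>\<^sub>M \<nu>). A u > r - 5 * s} > 0"
        unfolding m_def using sp[OF nC] by simp
      then have "ereal (r - 5 * s) < esssup (\<nu> \<Otimes>\<^sub>M \<nu>) (\<lambda>u. ereal (A u))"
        by (rule ess_gt[OF pair_prob[OF N(1)] mAN[OF nC]])
      moreover have "t < ereal (r - 5 * s)"
      proof -
        have "r - 5 * s = t1 + s" unfolding s_def by (simp add: field_simps)
        then have "ereal t1 < ereal (r - 5 * s)" using s by simp
        then show ?thesis using y1(1) t1 by (metis order_less_trans)
      qed
      ultimately show "\<nu> \<in> {x \<in> C. t < dis_inf \<omega>X \<omega>Y x}" using nC disE by (auto intro: order_less_trans)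
    qed
  qed
qed

theorem mainTheorem1:
  fixes \<omega>X :: "'a::polish_space \<times> 'a \<Rightarrow> real" and \<mu>X :: "'a measure"
    and \<omega>Y :: "'b::polish_space \<times> 'b \<Rightarrow> real" and \<mu>Y :: "'b measure"
  assumes "measure_network \<omega>X \<mu>X" and "measure_network \<omega>Y \<mu>Y"
  shows "(\<forall>p::real. 1 \<le> p \<longrightarrow>
           continuous_map (subtopology narrow_topology (couplings \<mu>X \<mu>Y)) euclideanreal
             (dis_p p \<omega>X \<omega>Y))
         \<and> lower_semicontinuous_map (subtopology narrow_topology (couplings \<mu>X \<mu>Y)) (dis_inf \<omega>X \<omega>Y)"
  using dis_p_cont[OF assms] dis_inf_lsc[OF assms] by blast

end
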